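(* In the imprimitive setting described in the context, suppose $K_0\ne1$ and $K_v\cong D_{2m}$ where $m=n$ or $2m=n$. Then $K\cong\mathbb{Z}_p^2\rtimes\mathbb{Z}_2$ or $K\cong\mathbb{Z}_p^2\rtimes D_4$, where $D_4\cong\mathbb{Z}_2\times\mathbb{Z}_2$.
   Context: Setting: $p\ge3$ is a prime, $G$ is a transitive permutation group of degree $p^2$ on a set $\Omega$ with point stabilizers $G_v\cong D_{2n}$ (dihedral of order $2n$, $n\ge2$), and $G$ is imprimitive; $\mathcal{B}$ is a nontrivial complete block system of $G$ (blocks of size $p$), $K$ is the kernel of the action of $G$ on $\mathcal{B}$, $B\in\mathcal{B}$ is a block, $v\in B$, $K_v$ is the stabilizer of $v$ in $K$, and $K_0$ is the kernel of the action of $K$ on $B$. $D_{2m}$ is dihedral of order $2m$. *)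

theory Defs
  imports "HOL-Algebra.Algebra" "HOL-Library.Disjoint_Sets"
begin

text \<open>The dihedral group of order 2n (i.e. D_{2n} in the paper's notation):
  elements (k, e) stand for r^k s^e with 0 \<le> k < n, where r is a rotation
  of order n and s a reflection with s r s = r^{-1}.\<close>
definition dihedral_group :: "nat \<Rightarrow> (int \<times> bool) monoid" where
  "dihedral_group n =
     \<lparr>carrier = {0..<int n} \<times> (UNIV :: bool set),
      monoid.mult = (\<lambda>x y. ((fst x + (if snd x then - fst y else fst y)) mod int n, snd x \<noteq> snd y)),
      one = (0, False)\<rparr>"

definition semidirect_prod ::
  "('n, 'x) monoid_scheme \<Rightarrow> ('h, 'y) monoid_scheme \<Rightarrow> ('h \<Rightarrow> 'n \<Rightarrow> 'n) \<Rightarrow> ('n \<times> 'h) monoid" where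
  "semidirect_prod N H phi =
     \<lparr>carrier = carrier N \<times> carrier H,
      monoid.mult = (\<lambda>u w. (fst u \<otimes>\<^bsub>N\<^esub> phi (snd u) (fst w), snd u \<otimes>\<^bsub>H\<^esub> snd w)),
      one = (\<one>\<^bsub>N\<^esub>, \<one>\<^bsub>H\<^esub>)\<rparr>"

definition is_semidirect_of ::
  "('g, 'z) monoid_scheme \<Rightarrow> ('n, 'x) monoid_scheme \<Rightarrow> ('h, 'y) monoid_scheme \<Rightarrow> bool" where
  "is_semidirect_of K N H \<longleftrightarrow>
     (\<exists>phi. phi \<in> hom H (AutoGroup N) \<and> K \<cong> semidirect_prod N H phi)"

definition perm_group :: "'a set \<Rightarrow> ('a \<Rightarrow> 'a) set \<Rightarrow> ('a \<Rightarrow> 'a) monoid" where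
  "perm_group \<Omega> G = (BijGroup \<Omega>)\<lparr>carrier := G\<rparr>"

definition transitive_on :: "'a set \<Rightarrow> ('a \<Rightarrow> 'a) set \<Rightarrow> bool" where
  "transitive_on \<Omega> G \<longleftrightarrow> (\<forall>x\<in>\<Omega>. \<forall>y\<in>\<Omega>. \<exists>g\<in>G. g x = y)"

definition point_stabilizer :: "('a \<Rightarrow> 'a) set \<Rightarrow> 'a \<Rightarrow> ('a \<Rightarrow> 'a) set" where
  "point_stabilizer G v = {g \<in> G. g v = v}"

definition block_system :: "'a set \<Rightarrow> ('a \<Rightarrow> 'a) set \<Rightarrow> 'a set set \<Rightarrow> bool" where
  "block_system \<Omega> G \<B> \<longleftrightarrow> partition_on \<Omega> \<B> \<and> (\<forall>g\<in>G. \<forall>B\<in>\<B>. g ` B \<in> \<B>)"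

definition block_kernel :: "('a \<Rightarrow> 'a) set \<Rightarrow> 'a set set \<Rightarrow> ('a \<Rightarrow> 'a) set" where
  "block_kernel G \<B> = {g \<in> G. \<forall>B\<in>\<B>. g ` B = B}"

definition pointwise_kernel :: "('a \<Rightarrow> 'a) set \<Rightarrow> 'a set \<Rightarrow> ('a \<Rightarrow> 'a) set" where
  "pointwise_kernel K B = {g \<in> K. \<forall>x\<in>B. g x = x}"

end

theory Submission
  imports Defs
begin

abbreviation pinv :: "'a set \<Rightarrow> ('a\<Rightarrow>'a) \<Rightarrow> ('a\<Rightarrow>'a)" where "pinv \<Omega> f \<equiv> inv\<^bsub>BijGroup \<Omega>\<^esub> f"
abbreviation pmul :: "'a set \<Rightarrow> ('a\<Rightarrow>'a) \<Rightarrow> ('a\<Rightarrow>'a) \<Rightarrow> ('a\<Rightarrow>'a)" where "pmul \<Omega> f g \<equiv> f \<otimes>\<^bsub>BijGroup \<Omega>\<^esub> g"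

lemma carrier_SG[simp]: "carrier (BijGroup \<Omega>) = Bij \<Omega>"
  by (simp add: BijGroup_def)

lemma SG_mult_apply:
  "f \<in> Bij \<Omega> \<Longrightarrow> g \<in> Bij \<Omega> \<Longrightarrow> x \<in> \<Omega> \<Longrightarrow> (f \<otimes>\<^bsub>BijGroup \<Omega>\<^esub> g) x = f (g x)"
  by (simp add: BijGroup_def compose_def)

lemma SG_one: "\<one>\<^bsub>BijGroup \<Omega>\<^esub> = (\<lambda>x\<in>\<Omega>. x)"
  by (simp add: BijGroup_def)

lemma SG_one_apply: "x \<in> \<Omega> \<Longrightarrow> \<one>\<^bsub>BijGroup \<Omega>\<^esub> x = x"
  by (simp add: BijGroup_def)

lemma Bij_mem: "f \<in> Bij \<Omega> \<Longrightarrow> x \<in> \<Omega> \<Longrightarrow> f x \<in> \<Omega>"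
  by (auto simp: Bij_def bij_betw_def)

lemma Bij_inj: "f \<in> Bij \<Omega> \<Longrightarrow> inj_on f \<Omega>"
  by (auto simp: Bij_def bij_betw_def)

lemma Bij_image: "f \<in> Bij \<Omega> \<Longrightarrow> f ` \<Omega> = \<Omega>"
  by (auto simp: Bij_def bij_betw_def)

lemma SG_inv_mem: "f \<in> Bij \<Omega> \<Longrightarrow> pinv \<Omega> f \<in> Bij \<Omega>"
proof -
  interpret S: group "BijGroup \<Omega>" by (rule group_BijGroup)
  show "f \<in> Bij \<Omega> \<Longrightarrow> pinv \<Omega> f \<in> Bij \<Omega>" using S.inv_closed by simp
qed

lemma SG_inv_apply1:
  assumes "f \<in> Bij \<Omega>" "x \<in> \<Omega>"
  shows "f (pinv \<Omega> f x) = x"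
proof -
  interpret S: group "BijGroup \<Omega>" by (rule group_BijGroup)
  have "f \<otimes>\<^bsub>BijGroup \<Omega>\<^esub> pinv \<Omega> f = \<one>\<^bsub>BijGroup \<Omega>\<^esub>"
    by (rule S.r_inv) (simp add: assms)
  then have "(f \<otimes>\<^bsub>BijGroup \<Omega>\<^esub> pinv \<Omega> f) x = x"
    using assms by (simp only: SG_one_apply)
  then show ?thesis using SG_mult_apply[OF assms(1) SG_inv_mem[OF assms(1)] assms(2)] by simp
qed

lemma SG_inv_apply2:
  assumes "f \<in> Bij \<Omega>" "x \<in> \<Omega>"
  shows "pinv \<Omega> f (f x) = x"
proof -
  interpret S: group "BijGroup \<Omega>" by (rule group_BijGroup)
  have "pinv \<Omega> f \<otimes>\<^bsub>BijGroup \<Omega>\<^esub> f = \<one>\<^bsub>BijGroup \<Omega>\<^esub>"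
    by (rule S.l_inv) (simp add: assms)
  then have "(pinv \<Omega> f \<otimes>\<^bsub>BijGroup \<Omega>\<^esub> f) x = x"
    using assms by (simp only: SG_one_apply)
  then show ?thesis using SG_mult_apply[OF SG_inv_mem[OF assms(1)] assms(1) assms(2)] by simp
qed

lemma SG_inv_apply_mem: "f \<in> Bij \<Omega> \<Longrightarrow> x \<in> \<Omega> \<Longrightarrow> pinv \<Omega> f x \<in> \<Omega>"
  by (rule Bij_mem[OF SG_inv_mem])

lemma SG_mult_mem: "f \<in> Bij \<Omega> \<Longrightarrow> g \<in> Bij \<Omega> \<Longrightarrow> f \<otimes>\<^bsub>BijGroup \<Omega>\<^esub> g \<in> Bij \<Omega>"
proof -
  interpret S: group "BijGroup \<Omega>" by (rule group_BijGroup)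
  show "f \<in> Bij \<Omega> \<Longrightarrow> g \<in> Bij \<Omega> \<Longrightarrow> f \<otimes>\<^bsub>BijGroup \<Omega>\<^esub> g \<in> Bij \<Omega>" using S.m_closed by simp
qed

lemma SG_conj_apply:
  "h \<in> Bij \<Omega> \<Longrightarrow> n \<in> Bij \<Omega> \<Longrightarrow> y \<in> \<Omega> \<Longrightarrow>
    (h \<otimes>\<^bsub>BijGroup \<Omega>\<^esub> n \<otimes>\<^bsub>BijGroup \<Omega>\<^esub> pinv \<Omega> h) y = h (n (pinv \<Omega> h y))"
  by (simp add: SG_mult_apply SG_mult_mem SG_inv_mem SG_inv_apply_mem)

lemma perm_eqI:
  assumes "f \<in> Bij \<Omega>" "g \<in> Bij \<Omega>" "\<And>x. x \<in> \<Omega> \<Longrightarrow> f x = g x"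
  shows "f = g"
  using assms by (auto simp: Bij_def intro: extensionalityI)

lemma perm_eq_one:
  assumes "f \<in> Bij \<Omega>" "\<And>x. x \<in> \<Omega> \<Longrightarrow> f x = x"
  shows "f = \<one>\<^bsub>BijGroup \<Omega>\<^esub>"
  using assms by (intro perm_eqI[of _ \<Omega>]) (auto simp: SG_one_apply id_Bij SG_one)

lemma orbit_prime:
  fixes \<Omega> :: "'a set" and H N :: "('a\<Rightarrow>'a) set"
  assumes fin: "finite \<Omega>"
  and HS: "H \<subseteq> Bij \<Omega>" and Hinv: "\<forall>h\<in>H. pinv \<Omega> h \<in> H"
  and N: "subgroup N (BijGroup \<Omega>)"
  and norm: "\<forall>h\<in>H. \<forall>n\<in>N. h \<otimes>\<^bsub>BijGroup \<Omega>\<^esub> n \<otimes>\<^bsub>BijGroup \<Omega>\<^esub> pinv \<Omega> h \<in> N"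
  and Xs: "Xs \<subseteq> \<Omega>" and trans: "\<forall>x\<in>Xs. \<forall>y\<in>Xs. \<exists>h\<in>H. h x = y"
  and C: "C \<subseteq> Xs" "\<forall>n\<in>N. \<forall>x\<in>C. n x \<in> C" "Factorial_Ring.prime (card C)"
  and x0: "x0 \<in> Xs" "n0 \<in> N" "n0 x0 \<noteq> x0"
  shows "\<forall>x\<in>C. \<forall>y\<in>C. \<exists>n\<in>N. n x = y"
proof -
  interpret S: group "BijGroup \<Omega>" by (rule group_BijGroup)
  have NS: "N \<subseteq> Bij \<Omega>" using subgroup.subset[OF N] by simp
  define orb where "orb y = (\<lambda>n. n y) ` N" for y
  have orb_sub: "orb y \<subseteq> \<Omega>" if "y \<in> \<Omega>" for y
    using NS that Bij_mem[of _ \<Omega> y] unfolding orb_def by auto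
  have orb_h: "orb (h y) = h ` orb y" if h: "h \<in> H" and y: "y \<in> \<Omega>" for h y
  proof
    have hB: "h \<in> Bij \<Omega>" using h HS by blast
    have ihB: "pinv \<Omega> h \<in> Bij \<Omega>" by (rule SG_inv_mem[OF hB])
    show "h ` orb y \<subseteq> orb (h y)"
    proof
      fix z assume "z \<in> h ` orb y"
      then obtain n where n: "n \<in> N" "z = h (n y)" unfolding orb_def by blast
      define n' where "n' = h \<otimes>\<^bsub>BijGroup \<Omega>\<^esub> n \<otimes>\<^bsub>BijGroup \<Omega>\<^esub> pinv \<Omega> h"
      have "n' \<in> N" using norm h n unfolding n'_def by blast
      have nB: "n \<in> Bij \<Omega>" using n NS by auto
      have "n' (h y) = z"
        using n hB nB y unfolding n'_def
        by (simp add: SG_conj_apply Bij_mem SG_inv_apply2)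
      then show "z \<in> orb (h y)" unfolding orb_def by (intro rev_image_eqI[OF \<open>n' \<in> N\<close>]) simp
    qed
    show "orb (h y) \<subseteq> h ` orb y"
    proof
      fix z assume "z \<in> orb (h y)"
      then obtain n where n: "n \<in> N" "z = n (h y)" unfolding orb_def by blast
      define n' where "n' = pinv \<Omega> h \<otimes>\<^bsub>BijGroup \<Omega>\<^esub> n \<otimes>\<^bsub>BijGroup \<Omega>\<^esub> pinv \<Omega> (pinv \<Omega> h)"
      have "n' \<in> N" using norm h n Hinv unfolding n'_def by blast
      have nB: "n \<in> Bij \<Omega>" using n NS by auto
      have "h (n' y) = z"
        using n ihB nB y hB unfolding n'_def
        by (simp add: SG_mult_apply SG_mult_mem Bij_mem SG_inv_apply1 SG_inv_apply_mem)
      moreover have "n' y \<in> orb y" unfolding orb_def using \<open>n' \<in> N\<close> by (rule rev_image_eqI) simp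
      ultimately show "z \<in> h ` orb y" by (metis rev_image_eqI)
    qed
  qed
  have card_orb: "card (orb x) = card (orb x0)" if xX: "x \<in> Xs" for x
  proof -
    obtain h where h: "h \<in> H" "h x0 = x" using trans x0(1) xX by blast
    have e: "orb x = h ` orb x0" using orb_h[of h x0] h x0 Xs by auto
    have "inj_on h \<Omega>" using Bij_inj[of h \<Omega>] h HS by auto
    moreover have "orb x0 \<subseteq> \<Omega>" using orb_sub[of x0] x0 Xs by auto
    ultimately have "inj_on h (orb x0)" using inj_on_subset by auto
    then show ?thesis using e by (simp add: card_image)
  qed
  have finC: "finite C" using C Xs fin by (meson finite_subset subset_trans)
  have one_N: "\<one>\<^bsub>BijGroup \<Omega>\<^esub> \<in> N" by (rule subgroup.one_closed[OF N])
  have self_orb: "y \<in> orb y" if "y \<in> \<Omega>" for y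
    unfolding orb_def by (rule rev_image_eqI[OF one_N]) (simp add: SG_one_apply that)
  have s2: "card (orb x0) \<ge> 2"
  proof -
    have "{x0, n0 x0} \<subseteq> orb x0" using self_orb x0 Xs unfolding orb_def by auto
    moreover have "finite (orb x0)" using orb_sub[of x0] x0 Xs fin by (meson finite_subset subsetD)
    moreover have "card {x0, n0 x0} = 2" using x0(3) by simp
    ultimately show ?thesis by (metis card_mono)
  qed
  have orb_C: "orb x \<subseteq> C" if "x \<in> C" for x
    using C that unfolding orb_def by blast
  have orb_same: "orb z = orb y" if yz: "y \<in> \<Omega>" "z \<in> orb y" for y z
  proof -
    obtain n where n: "n \<in> N" "z = n y" using yz unfolding orb_def by blast
    have nB: "n \<in> Bij \<Omega>" using n NS by auto
    show ?thesis
    proof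
      show "orb z \<subseteq> orb y"
      proof
        fix w assume "w \<in> orb z"
        then obtain n' where "n' \<in> N" "w = n' z" unfolding orb_def by blast
        then have "w = (n' \<otimes>\<^bsub>BijGroup \<Omega>\<^esub> n) y" using n nB NS yz by (simp add: SG_mult_apply subsetD)
        moreover have "n' \<otimes>\<^bsub>BijGroup \<Omega>\<^esub> n \<in> N" using \<open>n' \<in> N\<close> n subgroup.m_closed[OF N] by auto
        ultimately show "w \<in> orb y" unfolding orb_def by (metis rev_image_eqI)
      qed
      show "orb y \<subseteq> orb z"
      proof
        fix w assume "w \<in> orb y"
        then obtain n' where n': "n' \<in> N" "w = n' y" unfolding orb_def by blast
        have "w = (n' \<otimes>\<^bsub>BijGroup \<Omega>\<^esub> pinv \<Omega> n) z"
          using n n' nB NS yz subsetD[OF NS n'(1)] by (simp add: SG_mult_apply SG_inv_mem SG_inv_apply2 Bij_mem)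
        moreover have "n' \<otimes>\<^bsub>BijGroup \<Omega>\<^esub> pinv \<Omega> n \<in> N"
          using n' n subgroup.m_closed[OF N] subgroup.m_inv_closed[OF N] by auto
        ultimately show "w \<in> orb z" unfolding orb_def by (metis rev_image_eqI)
      qed
    qed
  qed
  have part: "card (orb x0) * card (orb ` C) = card (\<Union>(orb ` C))"
  proof (rule card_partition)
    show "finite (orb ` C)" using finC by simp
    show "finite (\<Union>(orb ` C))" using orb_C finC by (meson UN_least finite_subset)
    show "\<And>c. c \<in> orb ` C \<Longrightarrow> card c = card (orb x0)" using card_orb C by blast
    show "\<And>c1 c2. c1 \<in> orb ` C \<Longrightarrow> c2 \<in> orb ` C \<Longrightarrow> c1 \<noteq> c2 \<Longrightarrow> c1 \<inter> c2 = {}"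
    proof -
      fix c1 c2 assume "c1 \<in> orb ` C" "c2 \<in> orb ` C" "c1 \<noteq> c2"
      then obtain a b where ab: "a \<in> C" "b \<in> C" "c1 = orb a" "c2 = orb b" by blast
      have "a \<in> \<Omega>" "b \<in> \<Omega>" using ab C Xs by auto
      show "c1 \<inter> c2 = {}"
      proof (rule ccontr)
        assume "c1 \<inter> c2 \<noteq> {}"
        then obtain z where "z \<in> orb a" "z \<in> orb b" using ab by blast
        then have "orb a = orb b" using orb_same \<open>a \<in> \<Omega>\<close> \<open>b \<in> \<Omega>\<close> by metis
        then show False using ab \<open>c1 \<noteq> c2\<close> by simp
      qed
    qed
  qed
  have "\<Union>(orb ` C) = C"
  proof
    show "\<Union>(orb ` C) \<subseteq> C" using orb_C by auto
    show "C \<subseteq> \<Union>(orb ` C)"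
    proof
      fix x assume "x \<in> C"
      then have "x \<in> \<Omega>" using C(1) Xs by auto
      then have "x \<in> orb x" by (rule self_orb)
      then show "x \<in> \<Union>(orb ` C)" using \<open>x \<in> C\<close> by auto
    qed
  qed
  with part have "card (orb x0) dvd card C" by (metis dvd_triv_left)
  then have "card (orb x0) = 1 \<or> card (orb x0) = card C"
    using C(3) unfolding prime_nat_iff by blast
  then have sC: "card (orb x0) = card C" using s2 by linarith
  show ?thesis
  proof (intro ballI)
    fix x y assume xy: "x \<in> C" "y \<in> C"
    have "card (orb x) = card C" using card_orb sC xy C by auto
    then have "orb x = C" using orb_C[OF xy(1)] finC by (simp add: card_subset_eq)
    then have "y \<in> (\<lambda>n. n x) ` N" using xy unfolding orb_def by simp
    then show "\<exists>n\<in>N. n x = y" by auto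
  qed
qed

context group begin

lemma cancel_l1: "g \<in> carrier G \<Longrightarrow> y \<in> carrier G \<Longrightarrow> g \<otimes> (inv g \<otimes> y) = y"
  by (simp add: m_assoc[symmetric])
lemma cancel_l2: "g \<in> carrier G \<Longrightarrow> y \<in> carrier G \<Longrightarrow> inv g \<otimes> (g \<otimes> y) = y"
  by (simp add: m_assoc[symmetric])

lemma conj_pow:
  assumes "g \<in> carrier G" "x \<in> carrier G"
  shows "(g \<otimes> x \<otimes> inv g) [^] (n::nat) = g \<otimes> x [^] n \<otimes> inv g"
proof (induction n)
  case 0
  then show ?case using assms by simp
next
  case (Suc n)
  have "(g \<otimes> x \<otimes> inv g) [^] Suc n = (g \<otimes> x [^] n \<otimes> inv g) \<otimes> (g \<otimes> x \<otimes> inv g)"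
    using Suc by simp
  also have "\<dots> = g \<otimes> x [^] n \<otimes> (inv g \<otimes> g) \<otimes> x \<otimes> inv g"
    using assms by (simp only: m_assoc inv_closed nat_pow_closed m_closed)
  also have "\<dots> = g \<otimes> (x [^] n \<otimes> x) \<otimes> inv g"
    using assms by (simp add: m_assoc)
  finally show ?case by simp
qed

lemma conj_conj:
  assumes "k \<in> carrier G" "g \<in> carrier G" "q \<in> carrier G"
  shows "k \<otimes> (g \<otimes> q \<otimes> inv g) \<otimes> inv k
       = g \<otimes> ((inv g \<otimes> k \<otimes> g) \<otimes> q \<otimes> inv (inv g \<otimes> k \<otimes> g)) \<otimes> inv g"
  using assms by (simp add: m_assoc inv_mult_group cancel_l1 cancel_l2)

lemma conj_compose:
  assumes "a \<in> carrier G" "b \<in> carrier G" "c \<in> carrier G"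
  shows "a \<otimes> (b \<otimes> c \<otimes> inv b) \<otimes> inv a = (a \<otimes> b) \<otimes> c \<otimes> inv (a \<otimes> b)"
  using assms by (simp add: m_assoc inv_mult_group)

lemma conj_powb:
  assumes "a \<in> carrier G" "r \<in> carrier G" "a \<otimes> r \<otimes> inv a = r [^] (e::nat)"
  shows "a \<otimes> r [^] (j::nat) \<otimes> inv a = r [^] (e * j)"
  using conj_pow[OF assms(1,2), of j] assms by (simp add: nat_pow_pow)

lemma conj_eq_commute:
  assumes "x \<in> carrier G" "y \<in> carrier G" "r \<in> carrier G"
    and "x \<otimes> r \<otimes> inv x = y \<otimes> r \<otimes> inv y"
  shows "(inv y \<otimes> x) \<otimes> r = r \<otimes> (inv y \<otimes> x)"
proof -
  have "x \<otimes> r = y \<otimes> r \<otimes> inv y \<otimes> x"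
    using assms by (metis inv_closed m_assoc m_closed r_one l_inv)
  then have "inv y \<otimes> (x \<otimes> r) = inv y \<otimes> (y \<otimes> r \<otimes> inv y \<otimes> x)" by simp
  then show ?thesis using assms by (simp add: m_assoc[symmetric])
qed

lemma prime_ord:
  assumes "x \<in> carrier G" "x \<noteq> \<one>" "x [^] (p::nat) = \<one>" "Factorial_Ring.prime p"
  shows "ord x = p"
proof -
  have "ord x dvd p" using assms pow_eq_id by blast
  moreover have "ord x \<noteq> 1" using assms ord_eq_1 by blast
  ultimately show ?thesis using assms(4) unfolding prime_nat_iff by blast
qed

lemma prime_pow_inj:
  assumes "x \<in> carrier G" "x \<noteq> \<one>" "x [^] (p::nat) = \<one>" "Factorial_Ring.prime p"
  shows "inj_on (\<lambda>i. x [^] i) {..<p}"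
proof -
  have "ord x = p" using prime_ord assms by blast
  moreover have "p > 0" using assms(4) prime_gt_0_nat by blast
  ultimately have "{..<p} = {0..ord x - 1}" by auto
  then show ?thesis using ord_inj[OF assms(1)] by simp
qed

lemma pow_mod_p:
  assumes "x \<in> carrier G" "x [^] (p::nat) = \<one>"
  shows "x [^] (i mod p) = x [^] i"
proof -
  have "x [^] i = x [^] (i mod p + p * (i div p))" by simp
  also have "\<dots> = x [^] (i mod p) \<otimes> x [^] (p * (i div p))"
    using assms(1) by (simp add: nat_pow_mult)
  also have "\<dots> = x [^] (i mod p) \<otimes> (x [^] p) [^] (i div p)"
    using assms(1) by (simp add: nat_pow_pow)
  finally show ?thesis using assms by simp
qed

lemma powers_closed_mult:
  assumes "x \<in> carrier G"
  shows "x [^] (i::nat) \<otimes> x [^] (j::nat) = x [^] (i + j)"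
  using assms by (simp add: nat_pow_mult)

lemma powers_inv:
  assumes "x \<in> carrier G" "x [^] (p::nat) = \<one>" "p > 0"
  shows "inv (x [^] (i::nat)) = x [^] ((p - 1) * i)"
proof -
  have e: "(p - 1) * i + i = p * i" using assms(3)
    by (metis Suc_diff_1 add.commute mult_Suc)
  have "x [^] ((p - 1) * i) \<otimes> x [^] i = x [^] ((p - 1) * i + i)"
    using assms(1) by (simp add: nat_pow_mult)
  also have "\<dots> = (x [^] p) [^] i" using assms(1) e by (simp add: nat_pow_pow)
  also have "\<dots> = \<one>" using assms by simp
  finally show ?thesis using assms(1) by (intro inv_equality) simp_all
qed

end

lemma bij_hom_inv_iso:
  assumes h: "h \<in> hom A B" "bij_betw h (carrier A) (carrier B)"
    and closed: "\<And>x y. x \<in> carrier A \<Longrightarrow> y \<in> carrier A \<Longrightarrow> x \<otimes>\<^bsub>A\<^esub> y \<in> carrier A"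
  shows "inv_into (carrier A) h \<in> iso B A"
proof -
  have HG: "bij_betw (inv_into (carrier A) h) (carrier B) (carrier A)"
    using h(2) by (simp add: bij_betw_inv_into)
  have *: "inv_into (carrier A) h x \<in> carrier A" if "x \<in> carrier B" for x
    by (meson HG bij_betwE that)
  have "inv_into (carrier A) h \<in> hom B A"
    unfolding hom_def
  proof safe
    show "\<And>x. x \<in> carrier B \<Longrightarrow> inv_into (carrier A) h x \<in> carrier A" by (rule *)
    show "inv_into (carrier A) h (x \<otimes>\<^bsub>B\<^esub> y) = inv_into (carrier A) h x \<otimes>\<^bsub>A\<^esub> inv_into (carrier A) h y"
      if "x \<in> carrier B" "y \<in> carrier B" for x y
    proof (rule inv_into_f_eq)
      show "inj_on h (carrier A)"
        using bij_betw_def h(2) by blast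
      show "inv_into (carrier A) h x \<otimes>\<^bsub>A\<^esub> inv_into (carrier A) h y \<in> carrier A"
        by (simp add: * closed that)
      have "h (inv_into (carrier A) h x \<otimes>\<^bsub>A\<^esub> inv_into (carrier A) h y)
          = h (inv_into (carrier A) h x) \<otimes>\<^bsub>B\<^esub> h (inv_into (carrier A) h y)"
        using h(1) * that unfolding hom_def by blast
      also have "\<dots> = x \<otimes>\<^bsub>B\<^esub> y"
        using h(2) that by (simp add: bij_betw_inv_into_right)
      finally show "h (inv_into (carrier A) h x \<otimes>\<^bsub>A\<^esub> inv_into (carrier A) h y) = x \<otimes>\<^bsub>B\<^esub> y" .
    qed
  qed
  then show ?thesis
    by (simp add: Group.iso_def HG)
qed

lemma semidirect_lemma:
  fixes Kg :: "('k, 'c) monoid_scheme" and N :: "('n, 'd) monoid_scheme" and H :: "('h, 'e) monoid_scheme"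
  assumes grK: "group Kg" and grN: "group N" and grH: "group H"
    and finN: "finite (carrier N)" and finH: "finite (carrier H)"
    and alpha: "\<alpha> \<in> hom N Kg" "inj_on \<alpha> (carrier N)"
    and beta: "\<beta> \<in> hom H Kg" "inj_on \<beta> (carrier H)"
    and conj: "\<And>h x. h \<in> carrier H \<Longrightarrow> x \<in> carrier N \<Longrightarrow>
                 \<beta> h \<otimes>\<^bsub>Kg\<^esub> \<alpha> x \<otimes>\<^bsub>Kg\<^esub> inv\<^bsub>Kg\<^esub> (\<beta> h) \<in> \<alpha> ` carrier N"
    and trivint: "\<And>x h. x \<in> carrier N \<Longrightarrow> h \<in> carrier H \<Longrightarrow> \<alpha> x = \<beta> h \<Longrightarrow> \<alpha> x = \<one>\<^bsub>Kg\<^esub>"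
    and card: "card (carrier Kg) = card (carrier N) * card (carrier H)"
  shows "is_semidirect_of Kg N H"
proof -
  interpret K: group Kg by (rule grK)
  interpret N: group N by (rule grN)
  interpret H: group H by (rule grH)
  interpret a: group_hom N Kg \<alpha> using alpha(1) grK grN by (simp add: group_hom_def group_hom_axioms_def)
  interpret b: group_hom H Kg \<beta> using beta(1) grK grH by (simp add: group_hom_def group_hom_axioms_def)
  have aC: "\<alpha> x \<in> carrier Kg" if "x \<in> carrier N" for x using that by simp
  have bC: "\<beta> x \<in> carrier Kg" if "x \<in> carrier H" for x using that by simp
  define cj where "cj h y = \<beta> h \<otimes>\<^bsub>Kg\<^esub> y \<otimes>\<^bsub>Kg\<^esub> inv\<^bsub>Kg\<^esub> (\<beta> h)" for h y
  define phi where "phi h = (\<lambda>x\<in>carrier N. inv_into (carrier N) \<alpha> (cj h (\<alpha> x)))" for h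
  have phiC: "phi h x \<in> carrier N" if "h \<in> carrier H" "x \<in> carrier N" for h x
    using conj[OF that] that unfolding phi_def cj_def by (simp add: inv_into_into)
  have phiA: "\<alpha> (phi h x) = cj h (\<alpha> x)" if "h \<in> carrier H" "x \<in> carrier N" for h x
    using conj[OF that] that unfolding phi_def cj_def by (simp add: f_inv_into_f)
  have cj_mult: "cj h (y \<otimes>\<^bsub>Kg\<^esub> z) = cj h y \<otimes>\<^bsub>Kg\<^esub> cj h z"
    if "h \<in> carrier H" "y \<in> carrier Kg" "z \<in> carrier Kg" for h y z
    using that bC[OF that(1)] unfolding cj_def by (simp add: K.m_assoc K.cancel_l2)
  have cj_inj: "y = z" if "h \<in> carrier H" "y \<in> carrier Kg" "z \<in> carrier Kg" "cj h y = cj h z" for h y z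
    using that bC[OF that(1)] unfolding cj_def by simp
  have phi_hom: "phi h \<in> hom N N" if h: "h \<in> carrier H" for h
  proof (rule homI)
    show "phi h x \<in> carrier N" if "x \<in> carrier N" for x using phiC h that by blast
    show "phi h (x \<otimes>\<^bsub>N\<^esub> y) = phi h x \<otimes>\<^bsub>N\<^esub> phi h y" if "x \<in> carrier N" "y \<in> carrier N" for x y
    proof -
      have "\<alpha> (phi h (x \<otimes>\<^bsub>N\<^esub> y)) = \<alpha> (phi h x \<otimes>\<^bsub>N\<^esub> phi h y)"
        using that h by (simp add: phiA phiC cj_mult)
      then show ?thesis using alpha(2) that h phiC by (simp add: inj_on_def)
    qed
  qed
  have phi_inj: "inj_on (phi h) (carrier N)" if h: "h \<in> carrier H" for h
  proof (rule inj_onI)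
    fix x y assume xy: "x \<in> carrier N" "y \<in> carrier N" "phi h x = phi h y"
    then have "cj h (\<alpha> x) = cj h (\<alpha> y)" using phiA h by metis
    then have "\<alpha> x = \<alpha> y" using cj_inj h xy aC by blast
    then show "x = y" using alpha(2) xy by (simp add: inj_on_def)
  qed
  have phi_bij: "bij_betw (phi h) (carrier N) (carrier N)" if h: "h \<in> carrier H" for h
  proof -
    have sub: "phi h ` carrier N \<subseteq> carrier N" using phiC h by blast
    have "card (phi h ` carrier N) = card (carrier N)" using phi_inj[OF h] by (simp add: card_image)
    then have "phi h ` carrier N = carrier N" using sub finN by (simp add: card_subset_eq)
    then show ?thesis using phi_inj[OF h] by (simp add: bij_betw_def)
  qed
  have phi_auto: "phi h \<in> auto N" if h: "h \<in> carrier H" for h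
    using phi_hom[OF h] phi_bij[OF h] unfolding auto_def Bij_def phi_def by simp
  have phi_mult: "phi (h1 \<otimes>\<^bsub>H\<^esub> h2) = compose (carrier N) (phi h1) (phi h2)"
    if "h1 \<in> carrier H" "h2 \<in> carrier H" for h1 h2
  proof (rule extensionalityI)
    show "phi (h1 \<otimes>\<^bsub>H\<^esub> h2) \<in> extensional (carrier N)" unfolding phi_def by simp
    show "compose (carrier N) (phi h1) (phi h2) \<in> extensional (carrier N)" by (simp add: compose_def)
    fix x assume x: "x \<in> carrier N"
    have "\<alpha> (phi (h1 \<otimes>\<^bsub>H\<^esub> h2) x) = \<alpha> (phi h1 (phi h2 x))"
      using that x by (simp add: phiA phiC cj_def K.m_assoc K.inv_mult_group)
    then show "phi (h1 \<otimes>\<^bsub>H\<^esub> h2) x = compose (carrier N) (phi h1) (phi h2) x"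
      using alpha(2) that x phiC by (simp add: inj_on_def compose_def)
  qed
  have phi_H: "phi \<in> hom H (AutoGroup N)"
  proof (rule homI)
    show "phi h \<in> carrier (AutoGroup N)" if "h \<in> carrier H" for h
      using phi_auto that by (simp add: AutoGroup_def)
    show "phi (x \<otimes>\<^bsub>H\<^esub> y) = phi x \<otimes>\<^bsub>AutoGroup N\<^esub> phi y" if "x \<in> carrier H" "y \<in> carrier H" for x y
      using that phi_mult phi_auto by (simp add: AutoGroup_def BijGroup_def auto_def)
  qed
  define SD where "SD = semidirect_prod N H phi"
  have carSD: "carrier SD = carrier N \<times> carrier H" unfolding SD_def semidirect_prod_def by simp
  have multSD: "u \<otimes>\<^bsub>SD\<^esub> w = (fst u \<otimes>\<^bsub>N\<^esub> phi (snd u) (fst w), snd u \<otimes>\<^bsub>H\<^esub> snd w)" for u w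
    unfolding SD_def semidirect_prod_def by simp
  define Psi where "Psi u = \<alpha> (fst u) \<otimes>\<^bsub>Kg\<^esub> \<beta> (snd u)" for u
  have Psi_hom: "Psi \<in> hom SD Kg"
  proof (rule homI)
    show "Psi u \<in> carrier Kg" if "u \<in> carrier SD" for u using that carSD unfolding Psi_def by auto
    show "Psi (u \<otimes>\<^bsub>SD\<^esub> w) = Psi u \<otimes>\<^bsub>Kg\<^esub> Psi w" if uw: "u \<in> carrier SD" "w \<in> carrier SD" for u w
    proof -
      obtain n1 h1 n2 h2 where u: "u = (n1, h1)" "w = (n2, h2)" and c: "n1 \<in> carrier N" "h1 \<in> carrier H" "n2 \<in> carrier N" "h2 \<in> carrier H"
        using uw carSD by auto
      have "Psi (u \<otimes>\<^bsub>SD\<^esub> w) = \<alpha> n1 \<otimes>\<^bsub>Kg\<^esub> cj h1 (\<alpha> n2) \<otimes>\<^bsub>Kg\<^esub> (\<beta> h1 \<otimes>\<^bsub>Kg\<^esub> \<beta> h2)"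
        using c unfolding Psi_def u multSD by (simp add: phiA phiC)
      also have "\<dots> = \<alpha> n1 \<otimes>\<^bsub>Kg\<^esub> \<beta> h1 \<otimes>\<^bsub>Kg\<^esub> (\<alpha> n2 \<otimes>\<^bsub>Kg\<^esub> \<beta> h2)"
        using c unfolding cj_def by (simp add: K.m_assoc K.cancel_l2)
      finally show ?thesis unfolding Psi_def u by simp
    qed
  qed
  have Psi_inj: "inj_on Psi (carrier SD)"
  proof (rule inj_onI)
    fix u w assume uw: "u \<in> carrier SD" "w \<in> carrier SD" "Psi u = Psi w"
    obtain n1 h1 n2 h2 where u: "u = (n1, h1)" "w = (n2, h2)" and c: "n1 \<in> carrier N" "h1 \<in> carrier H" "n2 \<in> carrier N" "h2 \<in> carrier H"
      using uw carSD by auto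
    have e: "\<alpha> n1 \<otimes>\<^bsub>Kg\<^esub> \<beta> h1 = \<alpha> n2 \<otimes>\<^bsub>Kg\<^esub> \<beta> h2" using uw(3) unfolding Psi_def u by simp
    have "inv\<^bsub>Kg\<^esub> (\<alpha> n2) \<otimes>\<^bsub>Kg\<^esub> (\<alpha> n1 \<otimes>\<^bsub>Kg\<^esub> \<beta> h1) \<otimes>\<^bsub>Kg\<^esub> inv\<^bsub>Kg\<^esub> (\<beta> h1)
        = inv\<^bsub>Kg\<^esub> (\<alpha> n2) \<otimes>\<^bsub>Kg\<^esub> (\<alpha> n2 \<otimes>\<^bsub>Kg\<^esub> \<beta> h2) \<otimes>\<^bsub>Kg\<^esub> inv\<^bsub>Kg\<^esub> (\<beta> h1)"
      using e by simp
    then have "\<alpha> (inv\<^bsub>N\<^esub> n2 \<otimes>\<^bsub>N\<^esub> n1) = \<beta> (h2 \<otimes>\<^bsub>H\<^esub> inv\<^bsub>H\<^esub> h1)"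
      using c by (simp add: K.m_assoc K.cancel_l2)
    moreover have "inv\<^bsub>N\<^esub> n2 \<otimes>\<^bsub>N\<^esub> n1 \<in> carrier N" "h2 \<otimes>\<^bsub>H\<^esub> inv\<^bsub>H\<^esub> h1 \<in> carrier H" using c by auto
    ultimately have ea: "\<alpha> (inv\<^bsub>N\<^esub> n2 \<otimes>\<^bsub>N\<^esub> n1) = \<one>\<^bsub>Kg\<^esub>" and eb: "\<beta> (h2 \<otimes>\<^bsub>H\<^esub> inv\<^bsub>H\<^esub> h1) = \<one>\<^bsub>Kg\<^esub>"
      using trivint by metis+
    have "inv\<^bsub>N\<^esub> n2 \<otimes>\<^bsub>N\<^esub> n1 = \<one>\<^bsub>N\<^esub>"
      using ea alpha(2) c by (simp add: inj_on_def)
    then have "n1 = n2" using c by (metis N.inv_closed N.inv_equality N.inv_inv)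
    moreover have "h2 \<otimes>\<^bsub>H\<^esub> inv\<^bsub>H\<^esub> h1 = \<one>\<^bsub>H\<^esub>"
      using eb beta(2) c by (simp add: inj_on_def)
    then have "h1 = h2" using c by (metis H.inv_closed H.inv_equality H.inv_inv)
    ultimately show "u = w" using u by simp
  qed
  have Psi_bij: "bij_betw Psi (carrier SD) (carrier Kg)"
  proof -
    have sub: "Psi ` carrier SD \<subseteq> carrier Kg" using Psi_hom unfolding hom_def by blast
    have "card (Psi ` carrier SD) = card (carrier SD)" using Psi_inj by (simp add: card_image)
    also have "\<dots> = card (carrier Kg)" using card carSD by (simp add: card_cartesian_product)
    finally have cc: "card (Psi ` carrier SD) = card (carrier Kg)" .
    have "Psi ` carrier SD = carrier Kg"
    proof -
      have "card (carrier N) > 0" using finN N.one_closed card_gt_0_iff by blast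
      moreover have "card (carrier H) > 0" using finH H.one_closed card_gt_0_iff by blast
      ultimately have "card (carrier Kg) > 0" using card by simp
      then have "finite (carrier Kg)" using card_gt_0_iff by blast
      then show ?thesis using sub cc by (simp add: card_subset_eq)
    qed
    then show ?thesis using Psi_inj by (simp add: bij_betw_def)
  qed
  have closed: "u \<otimes>\<^bsub>SD\<^esub> w \<in> carrier SD" if "u \<in> carrier SD" "w \<in> carrier SD" for u w
    using that carSD phiC unfolding multSD by (auto simp: mem_Times_iff)
  have "inv_into (carrier SD) Psi \<in> iso Kg SD"
    by (rule bij_hom_inv_iso[OF Psi_hom Psi_bij closed])
  then have "Kg \<cong> SD" by (rule is_isoI)
  then show ?thesis unfolding is_semidirect_of_def SD_def using phi_H by blast
qed

lemma D_carrier: "carrier (dihedral_group m) = {0..<int m} \<times> (UNIV :: bool set)"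
  by (simp add: dihedral_group_def)

lemma D_mult: "(a, e) \<otimes>\<^bsub>dihedral_group m\<^esub> (b, f) = ((a + (if e then - b else b)) mod int m, e \<noteq> f)"
  by (simp add: dihedral_group_def)

lemma D_one: "\<one>\<^bsub>dihedral_group m\<^esub> = (0, False)"
  by (simp add: dihedral_group_def)

lemma pow_Suc_any: "x [^]\<^bsub>G\<^esub> Suc k = x [^]\<^bsub>G\<^esub> k \<otimes>\<^bsub>G\<^esub> x"
  by (simp add: nat_pow_def)

lemma D_pow_rot: "(a, False) [^]\<^bsub>dihedral_group m\<^esub> (k::nat) = ((int k * a) mod int m, False)"
proof (induction k)
  case 0
  then show ?case by (simp add: D_one)
next
  case (Suc k)
  show ?case
    by (simp only: pow_Suc_any Suc D_mult) (simp add: mod_add_right_eq algebra_simps)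
qed

lemma D_pow_refl: "(a, True) [^]\<^bsub>dihedral_group m\<^esub> (k::nat) = (if even k then (0, False) else (a mod int m, True))"
proof (induction k)
  case 0
  then show ?case by (simp add: D_one)
next
  case (Suc k)
  show ?case
    by (simp only: pow_Suc_any Suc) (simp add: D_mult mod_diff_left_eq)
qed

lemma D_card: "card (carrier (dihedral_group m)) = 2 * m"
proof -
  have "card ({0..<int m} \<times> (UNIV :: bool set)) = m * 2"
    by (simp add: card_cartesian_product)
  then show ?thesis by (simp add: D_carrier)
qed

lemma hom_pow_gen:
  assumes "monoid A" "h \<in> hom A B" "h \<one>\<^bsub>A\<^esub> = \<one>\<^bsub>B\<^esub>" "x \<in> carrier A"
  shows "h (x [^]\<^bsub>A\<^esub> (k::nat)) = h x [^]\<^bsub>B\<^esub> k"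
proof (induction k)
  case 0
  then show ?case using assms by simp
next
  case (Suc k)
  have "x [^]\<^bsub>A\<^esub> k \<in> carrier A" using assms by (simp add: monoid.nat_pow_closed)
  then have "h (x [^]\<^bsub>A\<^esub> Suc k) = h (x [^]\<^bsub>A\<^esub> k) \<otimes>\<^bsub>B\<^esub> h x"
    using assms by (simp add: pow_Suc_any hom_mult)
  then show ?case using Suc by (simp add: pow_Suc_any)
qed

lemma hom_D_one:
  assumes "group A" "h \<in> hom A (dihedral_group m)"
  shows "h \<one>\<^bsub>A\<^esub> = (0, False)"
proof -
  interpret A: group A by fact
  obtain a e where ae: "h \<one>\<^bsub>A\<^esub> = (a, e)" by fastforce
  have inC: "(a, e) \<in> carrier (dihedral_group m)"
    using assms(2) ae A.one_closed unfolding hom_def by (metis (no_types, lifting) PiE mem_Collect_eq)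
  then have a: "0 \<le> a" "a < int m" by (auto simp: D_carrier)
  have "h \<one>\<^bsub>A\<^esub> = h (\<one>\<^bsub>A\<^esub> \<otimes>\<^bsub>A\<^esub> \<one>\<^bsub>A\<^esub>)" by simp
  also have "\<dots> = (a, e) \<otimes>\<^bsub>dihedral_group m\<^esub> (a, e)" using hom_mult[OF assms(2) A.one_closed A.one_closed] ae by (simp only:)
  finally have "(a, e) = (a, e) \<otimes>\<^bsub>dihedral_group m\<^esub> (a, e)" using ae by simp
  then have "(a, e) = ((a + (if e then - a else a)) mod int m, e \<noteq> e)" by (simp only: D_mult)
  then have e: "e = False" and am: "(a + a) mod int m = a" by (auto split: if_splits)
  have "(a + a) mod int m = a mod int m" using am a by simp
  then have "int m dvd a" by (simp add: mod_eq_dvd_iff)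
  then have "a = 0" using a by (metis dvd_eq_mod_eq_0 mod_pos_pos_trivial)
  then show ?thesis using ae e by simp
qed

lemma group_D2: "group (dihedral_group 2)"
proof -
  have c: "carrier (dihedral_group 2) = {(0, False), (0, True), (1, False), (1, True)}"
    by (auto simp: D_carrier)
  show ?thesis
    apply (rule groupI)
    apply (simp_all only: c D_one)
    apply (auto simp: D_mult)
    done
qed

locale setting =
  fixes p n m :: nat and \<Omega> :: "'a set" and G :: "('a \<Rightarrow> 'a) set"
    and \<B> :: "'a set set" and B :: "'a set" and v :: 'a
  assumes pr: "Factorial_Ring.prime p" and p3: "p \<ge> 3"
    and fin\<Omega>: "finite \<Omega>" and card\<Omega>: "card \<Omega> = p ^ 2"
    and Gsub: "subgroup G (BijGroup \<Omega>)"
    and Gtrans: "transitive_on \<Omega> G"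
    and n2: "n \<ge> 2"
    and stabs: "\<forall>w\<in>\<Omega>. perm_group \<Omega> (point_stabilizer G w) \<cong> dihedral_group n"
    and blocks: "block_system \<Omega> G \<B>" and cardblocks: "\<forall>C\<in>\<B>. card C = p"
    and BB: "B \<in> \<B>" and vB: "v \<in> B"
    and K0nt: "pointwise_kernel (block_kernel G \<B>) B \<noteq> {\<one>\<^bsub>BijGroup \<Omega>\<^esub>}"
    and Kviso: "perm_group \<Omega> (point_stabilizer (block_kernel G \<B>) v) \<cong> dihedral_group m"
    and mn: "m = n \<or> 2 * m = n"
begin

abbreviation "S \<equiv> BijGroup \<Omega>"
abbreviation "K \<equiv> block_kernel G \<B>"
abbreviation "K0 \<equiv> pointwise_kernel K B"
abbreviation "Kv \<equiv> point_stabilizer K v"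

lemma S_group: "group S" by (rule group_BijGroup)
sublocale S: group "BijGroup \<Omega>" by (rule group_BijGroup)

lemma G_Bij: "G \<subseteq> Bij \<Omega>" using subgroup.subset[OF Gsub] by simp
lemma G_mult: "g \<in> G \<Longrightarrow> h \<in> G \<Longrightarrow> g \<otimes>\<^bsub>S\<^esub> h \<in> G" by (rule subgroup.m_closed[OF Gsub])
lemma G_inv: "g \<in> G \<Longrightarrow> pinv \<Omega> g \<in> G" by (rule subgroup.m_inv_closed[OF Gsub])
lemma G_one: "\<one>\<^bsub>S\<^esub> \<in> G" by (rule subgroup.one_closed[OF Gsub])
lemma G_B: "g \<in> G \<Longrightarrow> g \<in> Bij \<Omega>" using G_Bij by blast

lemma part: "partition_on \<Omega> \<B>" using blocks unfolding block_system_def by simp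
lemma blk_sub: "C \<in> \<B> \<Longrightarrow> C \<subseteq> \<Omega>" using partition_onD1[OF part] by blast
lemma blk_ex: "x \<in> \<Omega> \<Longrightarrow> \<exists>C\<in>\<B>. x \<in> C" using partition_onD1[OF part] by blast
lemma blk_uniq: "C1 \<in> \<B> \<Longrightarrow> C2 \<in> \<B> \<Longrightarrow> x \<in> C1 \<Longrightarrow> x \<in> C2 \<Longrightarrow> C1 = C2"
  using partition_onD2[OF part] unfolding disjoint_def by blast
lemma blk_img: "g \<in> G \<Longrightarrow> C \<in> \<B> \<Longrightarrow> g ` C \<in> \<B>"
  using blocks unfolding block_system_def by blast

lemma img_mult: "f \<in> Bij \<Omega> \<Longrightarrow> g \<in> Bij \<Omega> \<Longrightarrow> C \<subseteq> \<Omega> \<Longrightarrow> (f \<otimes>\<^bsub>S\<^esub> g) ` C = f ` (g ` C)"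
proof -
  assume a: "f \<in> Bij \<Omega>" "g \<in> Bij \<Omega>" "C \<subseteq> \<Omega>"
  have "\<And>x. x \<in> C \<Longrightarrow> (f \<otimes>\<^bsub>S\<^esub> g) x = f (g x)" using a by (auto simp: SG_mult_apply)
  then show ?thesis by (simp add: image_image)
qed

lemma img_one: "C \<subseteq> \<Omega> \<Longrightarrow> \<one>\<^bsub>S\<^esub> ` C = C"
proof -
  assume a: "C \<subseteq> \<Omega>"
  have "\<And>x. x \<in> C \<Longrightarrow> \<one>\<^bsub>S\<^esub> x = x" using a by (auto simp: SG_one_apply)
  then show ?thesis by simp
qed

lemma img_inv: "f \<in> Bij \<Omega> \<Longrightarrow> C \<subseteq> \<Omega> \<Longrightarrow> f ` C = C \<Longrightarrow> pinv \<Omega> f ` C = C"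
proof -
  assume a: "f \<in> Bij \<Omega>" "C \<subseteq> \<Omega>" "f ` C = C"
  have "pinv \<Omega> f ` C = pinv \<Omega> f ` (f ` C)" using a by simp
  also have "\<dots> = C"
  proof -
    have "\<And>x. x \<in> C \<Longrightarrow> pinv \<Omega> f (f x) = x" using a by (auto simp: SG_inv_apply2)
    then show ?thesis by (simp add: image_image)
  qed
  finally show ?thesis .
qed

lemma img_inv2: "f \<in> Bij \<Omega> \<Longrightarrow> C \<subseteq> \<Omega> \<Longrightarrow> f ` (pinv \<Omega> f ` C) = C"
proof -
  assume a: "f \<in> Bij \<Omega>" "C \<subseteq> \<Omega>"
  have "\<And>x. x \<in> C \<Longrightarrow> f (pinv \<Omega> f x) = x" using a by (auto simp: SG_inv_apply1)
  then show ?thesis by (simp add: image_image)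
qed

lemma K_def2: "K = {g \<in> G. \<forall>C\<in>\<B>. g ` C = C}" by (simp add: block_kernel_def)
lemma K_G: "K \<subseteq> G" unfolding block_kernel_def by blast
lemma K_B: "k \<in> K \<Longrightarrow> k \<in> Bij \<Omega>" using K_G G_Bij by blast
lemma K_fix: "k \<in> K \<Longrightarrow> C \<in> \<B> \<Longrightarrow> k ` C = C" unfolding block_kernel_def by blast
lemma K_pt: "k \<in> K \<Longrightarrow> C \<in> \<B> \<Longrightarrow> x \<in> C \<Longrightarrow> k x \<in> C" using K_fix by blast

lemma K_sub: "subgroup K S"
proof (rule S.subgroupI)
  show "K \<subseteq> carrier S" using K_G G_Bij by simp
  have "\<one>\<^bsub>S\<^esub> \<in> K" unfolding block_kernel_def using G_one img_one blk_sub by blast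
  then show "K \<noteq> {}" by blast
  show "pinv \<Omega> a \<in> K" if "a \<in> K" for a
  proof -
    have "pinv \<Omega> a \<in> G" using that K_G G_inv by auto
    moreover have "pinv \<Omega> a ` C = C" if "C \<in> \<B>" for C
      using img_inv[OF K_B[OF \<open>a \<in> K\<close>] blk_sub[OF that] K_fix[OF \<open>a \<in> K\<close> that]] .
    ultimately show ?thesis unfolding block_kernel_def by blast
  qed
  show "a \<otimes>\<^bsub>S\<^esub> b \<in> K" if "a \<in> K" "b \<in> K" for a b
  proof -
    have "a \<otimes>\<^bsub>S\<^esub> b \<in> G" using that K_G G_mult by blast
    moreover have "(a \<otimes>\<^bsub>S\<^esub> b) ` C = C" if "C \<in> \<B>" for C
      using img_mult[OF K_B K_B blk_sub] K_fix \<open>a \<in> K\<close> \<open>b \<in> K\<close> that by simp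
    ultimately show ?thesis unfolding block_kernel_def by blast
  qed
qed

lemma K_mult: "a \<in> K \<Longrightarrow> b \<in> K \<Longrightarrow> a \<otimes>\<^bsub>S\<^esub> b \<in> K" by (rule subgroup.m_closed[OF K_sub])
lemma K_inv: "a \<in> K \<Longrightarrow> pinv \<Omega> a \<in> K" by (rule subgroup.m_inv_closed[OF K_sub])
lemma K_one: "\<one>\<^bsub>S\<^esub> \<in> K" by (rule subgroup.one_closed[OF K_sub])

lemma K_normal: "g \<in> G \<Longrightarrow> k \<in> K \<Longrightarrow> g \<otimes>\<^bsub>S\<^esub> k \<otimes>\<^bsub>S\<^esub> pinv \<Omega> g \<in> K"
proof -
  assume gk: "g \<in> G" "k \<in> K"
  have gB: "g \<in> Bij \<Omega>" and kB: "k \<in> Bij \<Omega>" and giB: "pinv \<Omega> g \<in> Bij \<Omega>"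
    using gk G_B K_B SG_inv_mem by auto
  have "g \<otimes>\<^bsub>S\<^esub> k \<otimes>\<^bsub>S\<^esub> pinv \<Omega> g \<in> G" using gk K_G G_mult G_inv by blast
  moreover have "(g \<otimes>\<^bsub>S\<^esub> k \<otimes>\<^bsub>S\<^esub> pinv \<Omega> g) ` C = C" if C: "C \<in> \<B>" for C
  proof -
    have C1: "pinv \<Omega> g ` C \<in> \<B>" using blk_img[OF G_inv[OF gk(1)] C] .
    have "(g \<otimes>\<^bsub>S\<^esub> k \<otimes>\<^bsub>S\<^esub> pinv \<Omega> g) ` C = g ` (k ` (pinv \<Omega> g ` C))"
      using gB kB giB blk_sub[OF C] blk_sub[OF C1] by (simp add: img_mult SG_mult_mem)
    also have "\<dots> = g ` (pinv \<Omega> g ` C)" using K_fix[OF gk(2) C1] by simp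
    also have "\<dots> = C" using img_inv2[OF gB blk_sub[OF C]] .
    finally show ?thesis .
  qed
  ultimately show ?thesis unfolding block_kernel_def by blast
qed

lemma K0_def2: "K0 = {k \<in> K. \<forall>x\<in>B. k x = x}" by (simp add: pointwise_kernel_def)
lemma Kv_def2: "Kv = {k \<in> K. k v = v}" by (simp add: point_stabilizer_def)
lemma K0_K: "K0 \<subseteq> K" unfolding pointwise_kernel_def by blast
lemma K0_Kv: "K0 \<subseteq> Kv" unfolding pointwise_kernel_def point_stabilizer_def using vB by blast
lemma Kv_K: "Kv \<subseteq> K" unfolding point_stabilizer_def by blast

lemma K0_sub: "subgroup K0 S"
proof (rule S.subgroupI)
  show "K0 \<subseteq> carrier S" using K0_K K_B by auto
  have "\<one>\<^bsub>S\<^esub> \<in> K0" unfolding pointwise_kernel_def using K_one blk_sub[OF BB] by (auto simp: SG_one)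
  then show "K0 \<noteq> {}" by blast
  show "pinv \<Omega> a \<in> K0" if "a \<in> K0" for a
  proof -
    have a: "a \<in> K" "\<forall>x\<in>B. a x = x" using that unfolding pointwise_kernel_def by auto
    have "pinv \<Omega> a x = x" if "x \<in> B" for x
      using SG_inv_apply2[OF K_B[OF a(1)], of x] a(2) that blk_sub[OF BB] by auto
    then show ?thesis using K_inv a unfolding pointwise_kernel_def by blast
  qed
  show "a \<otimes>\<^bsub>S\<^esub> b \<in> K0" if "a \<in> K0" "b \<in> K0" for a b
    using that K_mult K_B blk_sub[OF BB] unfolding pointwise_kernel_def
    by (auto simp: SG_mult_apply subsetD)
qed

lemma Kv_sub: "subgroup Kv S"
proof (rule S.subgroupI)
  show "Kv \<subseteq> carrier S" using Kv_K K_B by auto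
  have v\<Omega>: "v \<in> \<Omega>" using vB blk_sub[OF BB] by auto
  have "\<one>\<^bsub>S\<^esub> \<in> Kv" unfolding point_stabilizer_def using K_one SG_one_apply v\<Omega> by auto
  then show "Kv \<noteq> {}" by blast
  show "pinv \<Omega> a \<in> Kv" if "a \<in> Kv" for a
  proof -
    have a: "a \<in> K" "a v = v" using that unfolding point_stabilizer_def by auto
    have "pinv \<Omega> a v = v" using SG_inv_apply2[OF K_B[OF a(1)] v\<Omega>] a(2) by simp
    then show ?thesis using K_inv a unfolding point_stabilizer_def by blast
  qed
  show "a \<otimes>\<^bsub>S\<^esub> b \<in> Kv" if "a \<in> Kv" "b \<in> Kv" for a b
    using that K_mult K_B v\<Omega> unfolding point_stabilizer_def
    by (auto simp: SG_mult_apply)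
qed

lemma K0_normal: "k \<in> K \<Longrightarrow> a \<in> K0 \<Longrightarrow> k \<otimes>\<^bsub>S\<^esub> a \<otimes>\<^bsub>S\<^esub> pinv \<Omega> k \<in> K0"
proof -
  assume ka: "k \<in> K" "a \<in> K0"
  have a: "a \<in> K" "\<forall>x\<in>B. a x = x" using ka unfolding pointwise_kernel_def by auto
  have "k \<otimes>\<^bsub>S\<^esub> a \<otimes>\<^bsub>S\<^esub> pinv \<Omega> k \<in> K" using ka a K_mult K_inv by blast
  moreover have "(k \<otimes>\<^bsub>S\<^esub> a \<otimes>\<^bsub>S\<^esub> pinv \<Omega> k) x = x" if x: "x \<in> B" for x
  proof -
    have x\<Omega>: "x \<in> \<Omega>" using x blk_sub[OF BB] by auto
    have "pinv \<Omega> k x \<in> B" using K_pt[OF K_inv[OF ka(1)] BB x] .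
    then have "a (pinv \<Omega> k x) = pinv \<Omega> k x" using a by blast
    then show ?thesis using SG_conj_apply[OF K_B[OF ka(1)] K_B[OF a(1)] x\<Omega>] SG_inv_apply1[OF K_B[OF ka(1)] x\<Omega>] by simp
  qed
  ultimately show ?thesis unfolding pointwise_kernel_def by blast
qed

end

lemma finite_Bij: "finite \<Omega> \<Longrightarrow> finite (Bij \<Omega>)"
proof -
  assume f: "finite \<Omega>"
  have "Bij \<Omega> \<subseteq> \<Omega> \<rightarrow>\<^sub>E \<Omega>" by (auto simp: Bij_def bij_betw_def PiE_def)
  moreover have "finite (\<Omega> \<rightarrow>\<^sub>E \<Omega>)" using f by (simp add: finite_PiE)
  ultimately show ?thesis by (rule finite_subset)
qed

lemma orbit_stab_card:
  assumes fin: "finite \<Omega>" and N: "subgroup N (BijGroup \<Omega>)" and x: "x \<in> \<Omega>"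
  shows "card ((\<lambda>g. g x) ` N) * card {g \<in> N. g x = x} = card N"
proof -
  interpret S: group "BijGroup \<Omega>" by (rule group_BijGroup)
  have grN: "group ((BijGroup \<Omega>)\<lparr>carrier := N\<rparr>)" by (rule S.subgroup_imp_group[OF N])
  have NS: "N \<subseteq> Bij \<Omega>" using subgroup.subset[OF N] by simp
  have hom: "(\<lambda>g. g) \<in> hom ((BijGroup \<Omega>)\<lparr>carrier := N\<rparr>) (BijGroup \<Omega>)"
    using NS by (auto simp: hom_def)
  interpret A: group_action "(BijGroup \<Omega>)\<lparr>carrier := N\<rparr>" \<Omega> "\<lambda>g. g"
    unfolding group_action_def group_hom_def group_hom_axioms_def
    using grN hom S.is_group by simp
  have "card (orbit ((BijGroup \<Omega>)\<lparr>carrier := N\<rparr>) (\<lambda>g. g) x) * card (stabilizer ((BijGroup \<Omega>)\<lparr>carrier := N\<rparr>) (\<lambda>g. g) x)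
        = order ((BijGroup \<Omega>)\<lparr>carrier := N\<rparr>)"
    by (rule A.orbit_stabilizer_theorem[OF x])
  moreover have "orbit ((BijGroup \<Omega>)\<lparr>carrier := N\<rparr>) (\<lambda>g. g) x = (\<lambda>g. g x) ` N"
    unfolding orbit_def by auto
  moreover have "stabilizer ((BijGroup \<Omega>)\<lparr>carrier := N\<rparr>) (\<lambda>g. g) x = {g \<in> N. g x = x}"
    unfolding stabilizer_def by auto
  ultimately show ?thesis by (simp add: order_def)
qed

context setting begin

lemma K_fin: "finite K" using finite_Bij[OF fin\<Omega>] K_B by (meson finite_subset subsetI)

lemma exists_k0: "\<exists>k0 u. k0 \<in> K0 \<and> u \<in> \<Omega> \<and> k0 u \<noteq> u"
proof -
  have "\<one>\<^bsub>S\<^esub> \<in> K0" using subgroup.one_closed[OF K0_sub] .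
  then obtain k0 where k0: "k0 \<in> K0" "k0 \<noteq> \<one>\<^bsub>S\<^esub>" using K0nt by blast
  have k0B: "k0 \<in> Bij \<Omega>" using k0 K0_K K_B by blast
  have "\<not> (\<forall>x\<in>\<Omega>. k0 x = x)"
  proof
    assume "\<forall>x\<in>\<Omega>. k0 x = x"
    then have "k0 = \<one>\<^bsub>S\<^esub>" using perm_eq_one[OF k0B] by blast
    then show False using k0 by simp
  qed
  then show ?thesis using k0 by blast
qed

lemma K_trans_blk: "C \<in> \<B> \<Longrightarrow> \<forall>x\<in>C. \<forall>y\<in>C. \<exists>k\<in>K. k x = y"
proof -
  assume C: "C \<in> \<B>"
  obtain k0 u where ku: "k0 \<in> K0" "u \<in> \<Omega>" "k0 u \<noteq> u" using exists_k0 by blast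
  show ?thesis
  proof (rule orbit_prime[of \<Omega> G K \<Omega> C u k0])
    show "finite \<Omega>" by (rule fin\<Omega>)
    show "G \<subseteq> Bij \<Omega>" by (rule G_Bij)
    show "\<forall>h\<in>G. pinv \<Omega> h \<in> G" using G_inv by blast
    show "subgroup K S" by (rule K_sub)
    show "\<forall>h\<in>G. \<forall>n\<in>K. h \<otimes>\<^bsub>S\<^esub> n \<otimes>\<^bsub>S\<^esub> pinv \<Omega> h \<in> K" using K_normal by blast
    show "\<Omega> \<subseteq> \<Omega>" by simp
    show "\<forall>x\<in>\<Omega>. \<forall>y\<in>\<Omega>. \<exists>h\<in>G. h x = y" using Gtrans unfolding transitive_on_def by blast
    show "C \<subseteq> \<Omega>" using blk_sub[OF C] .
    show "\<forall>n\<in>K. \<forall>x\<in>C. n x \<in> C" using K_pt C by blast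
    show "Factorial_Ring.prime (card C)" using cardblocks C pr by simp
    show "u \<in> \<Omega>" "k0 \<in> K" "k0 u \<noteq> u" using ku K0_K by auto
  qed
qed

lemma K0_trans: "\<exists>Bu\<in>\<B>. \<forall>x\<in>Bu. \<forall>y\<in>Bu. \<exists>k\<in>K0. k x = y"
proof -
  obtain k0 u where ku: "k0 \<in> K0" "u \<in> \<Omega>" "k0 u \<noteq> u" using exists_k0 by blast
  obtain Bu where Bu: "Bu \<in> \<B>" "u \<in> Bu" using blk_ex[OF ku(2)] by blast
  have "\<forall>x\<in>Bu. \<forall>y\<in>Bu. \<exists>k\<in>K0. k x = y"
  proof (rule orbit_prime[of \<Omega> K K0 Bu Bu u k0])
    show "finite \<Omega>" by (rule fin\<Omega>)
    show "K \<subseteq> Bij \<Omega>" using K_B by blast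
    show "\<forall>h\<in>K. pinv \<Omega> h \<in> K" using K_inv by blast
    show "subgroup K0 S" by (rule K0_sub)
    show "\<forall>h\<in>K. \<forall>n\<in>K0. h \<otimes>\<^bsub>S\<^esub> n \<otimes>\<^bsub>S\<^esub> pinv \<Omega> h \<in> K0" using K0_normal by blast
    show "Bu \<subseteq> \<Omega>" using blk_sub[OF Bu(1)] .
    show "\<forall>x\<in>Bu. \<forall>y\<in>Bu. \<exists>h\<in>K. h x = y" using K_trans_blk[OF Bu(1)] .
    show "Bu \<subseteq> Bu" by simp
    show "\<forall>n\<in>K0. \<forall>x\<in>Bu. n x \<in> Bu" using K_pt Bu K0_K by blast
    show "Factorial_Ring.prime (card Bu)" using cardblocks Bu pr by simp
    show "u \<in> Bu" "k0 \<in> K0" "k0 u \<noteq> u" using ku Bu by auto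
  qed
  then show ?thesis using Bu by blast
qed

lemma p_dvd_K0: "p dvd card K0"
proof -
  obtain Bu where Bu: "Bu \<in> \<B>" "\<forall>x\<in>Bu. \<forall>y\<in>Bu. \<exists>k\<in>K0. k x = y" using K0_trans by blast
  have "Bu \<noteq> {}" using cardblocks Bu pr by (metis card.empty not_prime_0)
  then obtain x where x: "x \<in> Bu" by blast
  have x\<Omega>: "x \<in> \<Omega>" using x blk_sub[OF Bu(1)] by blast
  have "(\<lambda>g. g x) ` K0 = Bu"
  proof
    show "(\<lambda>g. g x) ` K0 \<subseteq> Bu" using K_pt[OF _ Bu(1) x] K0_K by blast
    show "Bu \<subseteq> (\<lambda>g. g x) ` K0" using Bu(2) x by force
  qed
  then have "card Bu * card {g \<in> K0. g x = x} = card K0"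
    using orbit_stab_card[OF fin\<Omega> K0_sub x\<Omega>] by simp
  then show ?thesis using cardblocks Bu(1) by (metis dvd_triv_left)
qed

lemma K0_fin: "finite K0" using K_fin K0_K finite_subset by blast

lemma exists_q: "\<exists>q. q \<in> K0 \<and> q \<noteq> \<one>\<^bsub>S\<^esub> \<and> q [^]\<^bsub>S\<^esub> p = \<one>\<^bsub>S\<^esub>"
proof -
  let ?H = "S\<lparr>carrier := K0\<rparr>"
  have grH: "group ?H" by (rule S.subgroup_imp_group[OF K0_sub])
  obtain c where c: "card K0 = p * c" using p_dvd_K0 by blast
  have ord: "order ?H = p ^ 1 * c" using c by (simp add: order_def)
  have "\<exists>Hs. subgroup Hs ?H \<and> card Hs = p ^ 1"
    by (rule sylow_thm[OF pr grH ord]) (simp add: K0_fin)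
  then obtain Hs where Hs: "subgroup Hs ?H" "card Hs = p ^ 1" by blast
  have HsS: "subgroup Hs S" by (rule S.incl_subgroup[OF K0_sub Hs(1)])
  have HsK0: "Hs \<subseteq> K0" using subgroup.subset[OF Hs(1)] by simp
  have finHs: "finite Hs" using HsK0 K0_fin finite_subset by blast
  have "card Hs > 1" using Hs(2) p3 by simp
  have "\<not> Hs \<subseteq> {\<one>\<^bsub>S\<^esub>}"
  proof
    assume "Hs \<subseteq> {\<one>\<^bsub>S\<^esub>}"
    then have "card Hs \<le> card {\<one>\<^bsub>S\<^esub>}" by (intro card_mono) simp_all
    then show False using \<open>card Hs > 1\<close> by simp
  qed
  then obtain q where q: "q \<in> Hs" "q \<noteq> \<one>\<^bsub>S\<^esub>" by blast
  interpret Hg: group "S\<lparr>carrier := Hs\<rparr>" by (rule S.subgroup_imp_group[OF HsS])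
  have "q [^]\<^bsub>S\<lparr>carrier := Hs\<rparr>\<^esub> order (S\<lparr>carrier := Hs\<rparr>) = \<one>\<^bsub>S\<lparr>carrier := Hs\<rparr>\<^esub>"
    using Hg.pow_order_eq_1 q(1) finHs by (simp add: order_def)
  then have "q [^]\<^bsub>S\<^esub> p = \<one>\<^bsub>S\<^esub>" using Hs(2) by (simp add: order_def) (metis S.nat_pow_consistent)
  then show ?thesis using q HsK0 by blast
qed

end

lemma Dp_card:
  assumes m: "m > 0" and pr: "Factorial_Ring.prime (p::nat)"
  shows "card {(a::int, False) | a. 0 \<le> a \<and> a < int m \<and> int m dvd int p * a} \<le> p"
proof (cases "p dvd m")
  case True
  then obtain d where d: "m = p * d" by blast
  have p0: "p > 0" using pr prime_gt_0_nat by blast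
  have d0: "d > 0" using d m by (simp add: gr0I)
  have sub: "{(a::int, False) | a. 0 \<le> a \<and> a < int m \<and> int m dvd int p * a} \<subseteq> (\<lambda>i. (int d * int i, False)) ` {..<p}"
  proof
    fix z assume "z \<in> {(a::int, False) | a. 0 \<le> a \<and> a < int m \<and> int m dvd int p * a}"
    then obtain a where a: "z = (a, False)" "0 \<le> a" "a < int m" "int m dvd int p * a" by blast
    have "int p * int d dvd int p * a" using a(4) d by simp
    then have "int d dvd a" using p0 by (simp add: dvd_mult_cancel_left)
    then obtain j where j: "a = int d * j" by blast
    have j0: "j \<ge> 0" using a(2) j d0 by (simp add: zero_le_mult_iff)
    have "int d * j < int d * int p" using a(3) j d by (simp add: mult.commute)
    then have jp: "j < int p" using d0 by simp
    have "z = (int d * int (nat j), False)" using a(1) j j0 by simp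
    moreover have "nat j \<in> {..<p}" using jp j0 by simp
    ultimately show "z \<in> (\<lambda>i. (int d * int i, False)) ` {..<p}" by blast
  qed
  have "card ((\<lambda>i. (int d * int i, False)) ` {..<p}) \<le> p"
    using card_image_le[of "{..<p}"] by simp
  then show ?thesis using card_mono[OF _ sub] by (meson finite_imageI finite_lessThan le_trans)
next
  case False
  have cop: "coprime (int m) (int p)"
    using False pr by (metis coprime_commute coprime_int_iff prime_imp_coprime)
  have sub: "{(a::int, False) | a. 0 \<le> a \<and> a < int m \<and> int m dvd int p * a} \<subseteq> {(0, False)}"
  proof
    fix z assume "z \<in> {(a::int, False) | a. 0 \<le> a \<and> a < int m \<and> int m dvd int p * a}"
    then obtain a where a: "z = (a, False)" "0 \<le> a" "a < int m" "int m dvd int p * a" by blast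
    have "int m dvd a" using a(4) cop by (simp add: coprime_dvd_mult_right_iff)
    then have "a = 0" using a(2,3) by (metis dvd_eq_mod_eq_0 mod_pos_pos_trivial)
    then show "z \<in> {(0, False)}" using a(1) by simp
  qed
  have "card {(0::int, False)} \<le> p" using prime_gt_0_nat[OF pr] by simp
  then show ?thesis using card_mono[OF _ sub] by simp
qed

context setting begin

abbreviation "PK \<equiv> perm_group \<Omega> Kv"
abbreviation "DM \<equiv> dihedral_group m"

lemma PK_eq: "PK = S\<lparr>carrier := Kv\<rparr>" by (simp add: perm_group_def)
lemma PK_group: "group PK" using S.subgroup_imp_group[OF Kv_sub] by (simp add: PK_eq)

definition phi where "phi = (SOME f. f \<in> iso PK DM)"

lemma phi_iso: "phi \<in> iso PK DM"
proof -
  have "\<exists>f. f \<in> iso PK DM" using Kviso unfolding is_iso_def by blast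
  then show ?thesis unfolding phi_def by (rule someI_ex)
qed

lemma phi_hom: "phi \<in> hom PK DM" using phi_iso by (simp add: iso_def)
lemma phi_mult: "x \<in> Kv \<Longrightarrow> y \<in> Kv \<Longrightarrow> phi (x \<otimes>\<^bsub>S\<^esub> y) = phi x \<otimes>\<^bsub>DM\<^esub> phi y"
  using phi_hom unfolding hom_def by (simp add: PK_eq)
lemma phi_inj: "inj_on phi Kv" using phi_iso by (simp add: iso_def bij_betw_def PK_eq)
lemma phi_img: "phi ` Kv = carrier DM" using phi_iso by (simp add: iso_def bij_betw_def PK_eq)
lemma phi_C: "x \<in> Kv \<Longrightarrow> phi x \<in> carrier DM" using phi_img by blast
lemma phi_one: "phi \<one>\<^bsub>S\<^esub> = (0, False)"
  using hom_D_one[OF PK_group phi_hom] by (simp add: PK_eq)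

lemma phi_pow: "x \<in> Kv \<Longrightarrow> phi (x [^]\<^bsub>S\<^esub> (k::nat)) = phi x [^]\<^bsub>DM\<^esub> k"
proof -
  assume x: "x \<in> Kv"
  have "phi (x [^]\<^bsub>PK\<^esub> k) = phi x [^]\<^bsub>DM\<^esub> k"
    by (rule hom_pow_gen[OF group.is_monoid[OF PK_group] phi_hom]) (simp_all add: PK_eq phi_one x D_one)
  moreover have "x [^]\<^bsub>PK\<^esub> k = x [^]\<^bsub>S\<^esub> k" unfolding PK_eq by (metis S.nat_pow_consistent)
  ultimately show ?thesis by simp
qed

lemma m_pos: "m > 0"
proof -
  have "\<one>\<^bsub>S\<^esub> \<in> Kv" by (rule subgroup.one_closed[OF Kv_sub])
  then have "(0::int, False) \<in> carrier DM" using phi_C phi_one by metis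
  then show ?thesis by (simp add: D_carrier)
qed

lemma card_Kv: "card Kv = 2 * m"
proof -
  have "card (phi ` Kv) = card Kv" using phi_inj by (simp add: card_image)
  then show ?thesis using phi_img D_card by simp
qed

lemma elem_p:
  assumes x: "x \<in> Kv" "x [^]\<^bsub>S\<^esub> p = \<one>\<^bsub>S\<^esub>"
  shows "\<exists>a. phi x = (a, False) \<and> 0 \<le> a \<and> a < int m \<and> int m dvd int p * a"
proof -
  obtain a e where ae: "phi x = (a, e)" by fastforce
  have aC: "0 \<le> a" "a < int m" using phi_C[OF x(1)] ae by (auto simp: D_carrier)
  have "(a, e) [^]\<^bsub>DM\<^esub> p = (0, False)" using phi_pow[OF x(1), of p] x(2) ae phi_one by simp
  moreover have "odd p" using prime_odd_nat[OF pr] p3 by simp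
  ultimately have e: "e = False" by (cases e) (simp_all add: D_pow_refl)
  then have "(int p * a) mod int m = 0" using \<open>(a, e) [^]\<^bsub>DM\<^esub> p = (0, False)\<close> by (simp add: D_pow_rot)
  then have "int m dvd int p * a" by (simp add: dvd_eq_mod_eq_0)
  then show ?thesis using ae e aC by blast
qed

definition T where "T = {x \<in> K0. x [^]\<^bsub>S\<^esub> p = \<one>\<^bsub>S\<^esub>}"

lemma T_card_le: "card T \<le> p"
proof -
  let ?Dp = "{(a::int, False) | a. 0 \<le> a \<and> a < int m \<and> int m dvd int p * a}"
  have sub: "phi ` T \<subseteq> ?Dp"
  proof
    fix z assume "z \<in> phi ` T"
    then obtain x where x: "x \<in> T" "z = phi x" by blast
    have "x \<in> Kv" "x [^]\<^bsub>S\<^esub> p = \<one>\<^bsub>S\<^esub>" using x(1) K0_Kv unfolding T_def by auto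
    then show "z \<in> ?Dp" using elem_p x(2) by blast
  qed
  have TKv: "T \<subseteq> Kv" using K0_Kv unfolding T_def by auto
  have "card (phi ` T) = card T" using inj_on_subset[OF phi_inj TKv] by (simp add: card_image)
  moreover have "finite ?Dp"
  proof -
    have "?Dp \<subseteq> {0..<int m} \<times> {False}" by auto
    then show ?thesis by (rule finite_subset) simp
  qed
  ultimately show ?thesis using card_mono[OF _ sub] Dp_card[OF m_pos pr] by linarith
qed

definition q where "q = (SOME q. q \<in> K0 \<and> q \<noteq> \<one>\<^bsub>S\<^esub> \<and> q [^]\<^bsub>S\<^esub> p = \<one>\<^bsub>S\<^esub>)"

lemma q_props: "q \<in> K0" "q \<noteq> \<one>\<^bsub>S\<^esub>" "q [^]\<^bsub>S\<^esub> p = \<one>\<^bsub>S\<^esub>"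
proof -
  have "q \<in> K0 \<and> q \<noteq> \<one>\<^bsub>S\<^esub> \<and> q [^]\<^bsub>S\<^esub> p = \<one>\<^bsub>S\<^esub>"
    unfolding q_def using exists_q by (rule someI_ex)
  then show "q \<in> K0" "q \<noteq> \<one>\<^bsub>S\<^esub>" "q [^]\<^bsub>S\<^esub> p = \<one>\<^bsub>S\<^esub>" by auto
qed

lemma q_B: "q \<in> Bij \<Omega>" using q_props(1) K0_K K_B by blast

lemma K0_pow: "x \<in> K0 \<Longrightarrow> x [^]\<^bsub>S\<^esub> (i::nat) \<in> K0"
proof (induction i)
  case 0
  then show ?case using subgroup.one_closed[OF K0_sub] by simp
next
  case (Suc i)
  then show ?case using subgroup.m_closed[OF K0_sub] by simp
qed

lemma T_eq: "T = (\<lambda>i. q [^]\<^bsub>S\<^esub> i) ` {..<p}" and T_card: "card T = p"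
proof -
  have inj: "inj_on (\<lambda>i. q [^]\<^bsub>S\<^esub> i) {..<p}"
    using S.prime_pow_inj[of q p] q_B q_props pr by simp
  have sub: "(\<lambda>i. q [^]\<^bsub>S\<^esub> i) ` {..<p} \<subseteq> T"
  proof
    fix z assume "z \<in> (\<lambda>i. q [^]\<^bsub>S\<^esub> i) ` {..<p}"
    then obtain i :: nat where z: "z = q [^]\<^bsub>S\<^esub> i" by blast
    have "z \<in> K0" using z K0_pow q_props(1) by simp
    moreover have "z [^]\<^bsub>S\<^esub> p = \<one>\<^bsub>S\<^esub>"
      using z q_B q_props(3) by (simp add: S.nat_pow_pow mult.commute[of i p] S.nat_pow_pow[symmetric])
    ultimately show "z \<in> T" unfolding T_def by blast
  qed
  have c: "card ((\<lambda>i. q [^]\<^bsub>S\<^esub> i) ` {..<p}) = p" using inj by (simp add: card_image)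
  have finT: "finite T" using K0_fin unfolding T_def by simp
  have "card T \<le> p" by (rule T_card_le)
  then show "T = (\<lambda>i. q [^]\<^bsub>S\<^esub> i) ` {..<p}" using sub c finT
    by (metis card_seteq)
  then show "card T = p" using c by simp
qed

lemma p_dvd_m: "p dvd m"
proof (rule ccontr)
  assume np: "\<not> p dvd m"
  have qKv: "q \<in> Kv" using q_props(1) K0_Kv by blast
  obtain a where a: "phi q = (a, False)" "0 \<le> a" "a < int m" "int m dvd int p * a"
    using elem_p[OF qKv q_props(3)] by blast
  have cop: "coprime (int m) (int p)"
    using np pr by (metis coprime_commute coprime_int_iff prime_imp_coprime)
  have "int m dvd a" using a(4) cop by (simp add: coprime_dvd_mult_right_iff)
  then have "a = 0" using a(2,3) by (metis dvd_eq_mod_eq_0 mod_pos_pos_trivial)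
  then have "phi q = phi \<one>\<^bsub>S\<^esub>" using a(1) phi_one by simp
  moreover have "\<one>\<^bsub>S\<^esub> \<in> Kv" by (rule subgroup.one_closed[OF Kv_sub])
  ultimately have "q = \<one>\<^bsub>S\<^esub>" using phi_inj qKv by (simp add: inj_on_def)
  then show False using q_props(2) by simp
qed

end

context setting begin

lemma q_pow_T: "q [^]\<^bsub>S\<^esub> (i::nat) \<in> T"
proof -
  have "q [^]\<^bsub>S\<^esub> i = q [^]\<^bsub>S\<^esub> (i mod p)"
    using S.pow_mod_p[of q p i] q_B q_props(3) by simp
  moreover have "i mod p < p" using prime_gt_0_nat[OF pr] by simp
  ultimately show ?thesis using T_eq by auto
qed

lemma T_pow: "x \<in> T \<Longrightarrow> \<exists>i::nat. x = q [^]\<^bsub>S\<^esub> i" using T_eq by auto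

lemma T_K0: "T \<subseteq> K0" unfolding T_def by auto
lemma T_B: "x \<in> T \<Longrightarrow> x \<in> Bij \<Omega>" using T_K0 K0_K K_B by blast

lemma T_sub: "subgroup T S"
proof (rule S.subgroupI)
  show "T \<subseteq> carrier S" using T_B by auto
  show "T \<noteq> {}" using q_pow_T by blast
  show "inv\<^bsub>S\<^esub> a \<in> T" if aT: "a \<in> T" for a
  proof -
    obtain i :: nat where i: "a = q [^]\<^bsub>S\<^esub> i" using T_pow[OF aT] by blast
    have "inv\<^bsub>S\<^esub> a = q [^]\<^bsub>S\<^esub> ((p - 1) * i)"
      using S.powers_inv[of q p i] q_B q_props(3) prime_gt_0_nat[OF pr] i by simp
    then show ?thesis using q_pow_T by simp
  qed
  show "a \<otimes>\<^bsub>S\<^esub> b \<in> T" if ab: "a \<in> T" "b \<in> T" for a b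
  proof -
    obtain i :: nat where i: "a = q [^]\<^bsub>S\<^esub> i" using T_pow[OF ab(1)] by blast
    obtain j :: nat where j: "b = q [^]\<^bsub>S\<^esub> j" using T_pow[OF ab(2)] by blast
    have "a \<otimes>\<^bsub>S\<^esub> b = q [^]\<^bsub>S\<^esub> (i + j)" using i j q_B by (simp add: S.nat_pow_mult)
    then show ?thesis using q_pow_T by simp
  qed
qed

lemma T_normal: "k \<in> K \<Longrightarrow> x \<in> T \<Longrightarrow> k \<otimes>\<^bsub>S\<^esub> x \<otimes>\<^bsub>S\<^esub> pinv \<Omega> k \<in> T"
proof -
  assume kx: "k \<in> K" "x \<in> T"
  have "k \<otimes>\<^bsub>S\<^esub> x \<otimes>\<^bsub>S\<^esub> pinv \<Omega> k \<in> K0" using K0_normal kx T_K0 by blast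
  moreover have "(k \<otimes>\<^bsub>S\<^esub> x \<otimes>\<^bsub>S\<^esub> pinv \<Omega> k) [^]\<^bsub>S\<^esub> p = \<one>\<^bsub>S\<^esub>"
    using S.conj_pow[of k x p] kx K_B T_B T_def by simp
  ultimately show ?thesis unfolding T_def by blast
qed

lemma T_trans: "\<exists>Bq\<in>\<B>. \<forall>x\<in>Bq. \<forall>y\<in>Bq. \<exists>t\<in>T. t x = y"
proof -
  have "\<not> (\<forall>x\<in>\<Omega>. q x = x)"
  proof
    assume "\<forall>x\<in>\<Omega>. q x = x"
    then have "q = \<one>\<^bsub>S\<^esub>" using perm_eq_one[OF q_B] by blast
    then show False using q_props(2) by simp
  qed
  then obtain u where u: "u \<in> \<Omega>" "q u \<noteq> u" by blast
  obtain Bq where Bq: "Bq \<in> \<B>" "u \<in> Bq" using blk_ex[OF u(1)] by blast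
  have "\<forall>x\<in>Bq. \<forall>y\<in>Bq. \<exists>t\<in>T. t x = y"
  proof (rule orbit_prime[of \<Omega> K T Bq Bq u q])
    show "finite \<Omega>" by (rule fin\<Omega>)
    show "K \<subseteq> Bij \<Omega>" using K_B by blast
    show "\<forall>h\<in>K. pinv \<Omega> h \<in> K" using K_inv by blast
    show "subgroup T S" by (rule T_sub)
    show "\<forall>h\<in>K. \<forall>n\<in>T. h \<otimes>\<^bsub>S\<^esub> n \<otimes>\<^bsub>S\<^esub> pinv \<Omega> h \<in> T" using T_normal by blast
    show "Bq \<subseteq> \<Omega>" using blk_sub[OF Bq(1)] .
    show "\<forall>x\<in>Bq. \<forall>y\<in>Bq. \<exists>h\<in>K. h x = y" using K_trans_blk[OF Bq(1)] .
    show "Bq \<subseteq> Bq" by simp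
    show "\<forall>n\<in>T. \<forall>x\<in>Bq. n x \<in> Bq" using K_pt Bq T_K0 K0_K by blast
    show "Factorial_Ring.prime (card Bq)" using cardblocks Bq pr by simp
    show "u \<in> Bq" "q \<in> T" "q u \<noteq> u" using u Bq q_pow_T[of 1] q_B by auto
  qed
  then show ?thesis using Bq by blast
qed

definition "goodr C r \<longleftrightarrow> r \<in> K \<and> r [^]\<^bsub>S\<^esub> p = \<one>\<^bsub>S\<^esub> \<and>
   (\<forall>x\<in>C. \<forall>y\<in>C. \<exists>i::nat. (r [^]\<^bsub>S\<^esub> i) x = y) \<and>
   (\<forall>k\<in>K. \<exists>e::nat. k \<otimes>\<^bsub>S\<^esub> r \<otimes>\<^bsub>S\<^esub> pinv \<Omega> k = r [^]\<^bsub>S\<^esub> e) \<and>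
   (\<exists>g\<in>G. r = g \<otimes>\<^bsub>S\<^esub> q \<otimes>\<^bsub>S\<^esub> pinv \<Omega> g)"

lemma exists_goodr: "C \<in> \<B> \<Longrightarrow> \<exists>r. goodr C r"
proof -
  assume C: "C \<in> \<B>"
  obtain Bq where Bq: "Bq \<in> \<B>" "\<forall>x\<in>Bq. \<forall>y\<in>Bq. \<exists>t\<in>T. t x = y" using T_trans by blast
  have "Bq \<noteq> {}" using cardblocks Bq pr by (metis card.empty not_prime_0)
  then obtain u where u: "u \<in> Bq" by blast
  have "C \<noteq> {}" using cardblocks C pr by (metis card.empty not_prime_0)
  then obtain c where c: "c \<in> C" by blast
  obtain g where g: "g \<in> G" "g u = c"
    using Gtrans blk_sub[OF Bq(1)] blk_sub[OF C] u c unfolding transitive_on_def by blast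
  have gB: "g \<in> Bij \<Omega>" using G_B g by blast
  have giB: "pinv \<Omega> g \<in> Bij \<Omega>" using SG_inv_mem[OF gB] .
  have "c \<in> g ` Bq" using u g(2) by (metis imageI)
  then have gBq: "g ` Bq = C" using blk_uniq[OF blk_img[OF g(1) Bq(1)] C, of c] c by blast
  have "\<And>x. x \<in> Bq \<Longrightarrow> pinv \<Omega> g (g x) = x" using blk_sub[OF Bq(1)] gB by (auto simp: SG_inv_apply2)
  then have "pinv \<Omega> g ` (g ` Bq) = Bq" by (simp add: image_image)
  then have giC: "pinv \<Omega> g ` C = Bq" using gBq by simp
  define r where "r = g \<otimes>\<^bsub>S\<^esub> q \<otimes>\<^bsub>S\<^esub> pinv \<Omega> g"
  have qK: "q \<in> K" using q_props(1) K0_K by blast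
  have rK: "r \<in> K" unfolding r_def using K_normal[OF g(1) qK] .
  have rpow: "r [^]\<^bsub>S\<^esub> i = g \<otimes>\<^bsub>S\<^esub> q [^]\<^bsub>S\<^esub> i \<otimes>\<^bsub>S\<^esub> pinv \<Omega> g" for i :: nat
    unfolding r_def using S.conj_pow[of g q i] gB q_B by simp
  have rp: "r [^]\<^bsub>S\<^esub> p = \<one>\<^bsub>S\<^esub>" using rpow[of p] q_props(3) gB by simp
  have tr: "\<forall>x\<in>C. \<forall>y\<in>C. \<exists>i::nat. (r [^]\<^bsub>S\<^esub> i) x = y"
  proof (intro ballI)
    fix x y assume xy: "x \<in> C" "y \<in> C"
    have "pinv \<Omega> g x \<in> Bq" "pinv \<Omega> g y \<in> Bq" using giC xy by blast+
    then obtain t where t: "t \<in> T" "t (pinv \<Omega> g x) = pinv \<Omega> g y" using Bq(2) by blast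
    obtain i :: nat where i: "t = q [^]\<^bsub>S\<^esub> i" using T_pow[OF t(1)] by blast
    have x\<Omega>: "x \<in> \<Omega>" and y\<Omega>: "y \<in> \<Omega>" using xy blk_sub[OF C] by auto
    have tB: "t \<in> Bij \<Omega>" using T_B t(1) by blast
    have "(r [^]\<^bsub>S\<^esub> i) x = g (t (pinv \<Omega> g x))"
      using rpow[of i] i SG_conj_apply[OF gB tB x\<Omega>] by simp
    also have "\<dots> = y" using t(2) SG_inv_apply1[OF gB y\<Omega>] by simp
    finally show "\<exists>i::nat. (r [^]\<^bsub>S\<^esub> i) x = y" by blast
  qed
  have nm: "\<forall>k\<in>K. \<exists>e::nat. k \<otimes>\<^bsub>S\<^esub> r \<otimes>\<^bsub>S\<^esub> pinv \<Omega> k = r [^]\<^bsub>S\<^esub> e"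
  proof
    fix k assume k: "k \<in> K"
    have kB: "k \<in> Bij \<Omega>" using K_B k by blast
    define k' where "k' = pinv \<Omega> g \<otimes>\<^bsub>S\<^esub> k \<otimes>\<^bsub>S\<^esub> g"
    have "k' \<in> K" using K_normal[OF G_inv[OF g(1)] k] gB unfolding k'_def by simp
    then have "k' \<otimes>\<^bsub>S\<^esub> q \<otimes>\<^bsub>S\<^esub> pinv \<Omega> k' \<in> T" using T_normal q_pow_T[of 1] q_B by simp
    then obtain e :: nat where e: "k' \<otimes>\<^bsub>S\<^esub> q \<otimes>\<^bsub>S\<^esub> pinv \<Omega> k' = q [^]\<^bsub>S\<^esub> e" using T_pow by blast
    have "k \<otimes>\<^bsub>S\<^esub> r \<otimes>\<^bsub>S\<^esub> pinv \<Omega> k = g \<otimes>\<^bsub>S\<^esub> (k' \<otimes>\<^bsub>S\<^esub> q \<otimes>\<^bsub>S\<^esub> pinv \<Omega> k') \<otimes>\<^bsub>S\<^esub> pinv \<Omega> g"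
      unfolding r_def k'_def using S.conj_conj[of k g q] kB gB q_B by simp
    also have "\<dots> = r [^]\<^bsub>S\<^esub> e" using e rpow by simp
    finally show "\<exists>e::nat. k \<otimes>\<^bsub>S\<^esub> r \<otimes>\<^bsub>S\<^esub> pinv \<Omega> k = r [^]\<^bsub>S\<^esub> e" by blast
  qed
  show ?thesis unfolding goodr_def using rK rp tr nm g(1) r_def by blast
qed

end

lemma SG_pow_mem: "f \<in> Bij \<Omega> \<Longrightarrow> f [^]\<^bsub>BijGroup \<Omega>\<^esub> (n::nat) \<in> Bij \<Omega>"
proof -
  interpret S: group "BijGroup \<Omega>" by (rule group_BijGroup)
  show "f \<in> Bij \<Omega> \<Longrightarrow> f [^]\<^bsub>BijGroup \<Omega>\<^esub> (n::nat) \<in> Bij \<Omega>" using S.nat_pow_closed[of f n] by simp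
qed

declare SG_inv_mem[simp] SG_mult_mem[simp] SG_pow_mem[simp]

context setting begin

definition psi where "psi = inv_into Kv phi"

lemma psi_Kv: "a \<in> carrier DM \<Longrightarrow> psi a \<in> Kv"
  unfolding psi_def using phi_img by (metis inv_into_into)
lemma phi_psi: "a \<in> carrier DM \<Longrightarrow> phi (psi a) = a"
  unfolding psi_def using phi_img by (metis f_inv_into_f)
lemma Kv_B: "x \<in> Kv \<Longrightarrow> x \<in> Bij \<Omega>" using Kv_K K_B by blast

lemma psi_mult: "a \<in> carrier DM \<Longrightarrow> b \<in> carrier DM \<Longrightarrow> psi (a \<otimes>\<^bsub>DM\<^esub> b) = psi a \<otimes>\<^bsub>S\<^esub> psi b"
proof -
  assume ab: "a \<in> carrier DM" "b \<in> carrier DM"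
  have inK: "psi a \<otimes>\<^bsub>S\<^esub> psi b \<in> Kv" using subgroup.m_closed[OF Kv_sub] psi_Kv ab by blast
  have e: "phi (psi a \<otimes>\<^bsub>S\<^esub> psi b) = a \<otimes>\<^bsub>DM\<^esub> b" using phi_mult psi_Kv phi_psi ab by simp
  have "psi (a \<otimes>\<^bsub>DM\<^esub> b) = psi (phi (psi a \<otimes>\<^bsub>S\<^esub> psi b))" using e by simp
  also have "\<dots> = psi a \<otimes>\<^bsub>S\<^esub> psi b" using inv_into_f_f[OF phi_inj inK] by (simp add: psi_def)
  finally show ?thesis .
qed

lemma psi_one: "psi (0, False) = \<one>\<^bsub>S\<^esub>"
proof -
  have "\<one>\<^bsub>S\<^esub> \<in> Kv" by (rule subgroup.one_closed[OF Kv_sub])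
  then show ?thesis unfolding psi_def using inv_into_f_eq[OF phi_inj] phi_one by simp
qed

lemma m3: "m \<ge> 3"
proof -
  have "p \<le> m" using p_dvd_m m_pos by (simp add: dvd_imp_le)
  then show ?thesis using p3 by simp
qed

definition "rho = psi (1, False)"
definition "sigma = psi (0, True)"
definition "Xc = rho \<otimes>\<^bsub>S\<^esub> sigma"
definition "Yc = sigma \<otimes>\<^bsub>S\<^esub> rho"
definition "cc = Yc \<otimes>\<^bsub>S\<^esub> Xc"

lemma D_mem1: "(1::int, False) \<in> carrier DM" using m3 by (simp add: D_carrier)
lemma D_mem2: "(0::int, True) \<in> carrier DM" using m3 by (simp add: D_carrier)
lemma D_mem3: "((-1) mod int m, True) \<in> carrier DM" using m3 by (simp add: D_carrier)
lemma D_mem4: "(1::int, True) \<in> carrier DM" using m3 by (simp add: D_carrier)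

lemma rho_Kv: "rho \<in> Kv" unfolding rho_def using psi_Kv D_mem1 by blast
lemma sigma_Kv: "sigma \<in> Kv" unfolding sigma_def using psi_Kv D_mem2 by blast

lemma Yc_eq: "Yc = psi ((-1) mod int m, True)"
proof -
  have "(0::int, True) \<otimes>\<^bsub>DM\<^esub> (1, False) = ((-1) mod int m, True)" by (simp add: D_mult)
  then show ?thesis unfolding Yc_def sigma_def rho_def using psi_mult[OF D_mem2 D_mem1] by simp
qed

lemma Xc_eq: "Xc = psi (1, True)"
proof -
  have "(1::int, False) \<otimes>\<^bsub>DM\<^esub> (0, True) = (1, True)" using m3 by (simp add: D_mult)
  then show ?thesis unfolding Xc_def sigma_def rho_def using psi_mult[OF D_mem1 D_mem2] by simp
qed

lemma Yc_inv: "inv\<^bsub>S\<^esub> Yc = Yc"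
proof -
  have "((-1) mod int m, True) \<otimes>\<^bsub>DM\<^esub> ((-1) mod int m, True) = (0, False)" by (simp add: D_mult)
  then have "Yc \<otimes>\<^bsub>S\<^esub> Yc = \<one>\<^bsub>S\<^esub>" using Yc_eq psi_mult[OF D_mem3 D_mem3] psi_one by simp
  moreover have "Yc \<in> carrier S" using Yc_eq psi_Kv[OF D_mem3] Kv_B by simp
  ultimately show ?thesis using S.inv_equality by blast
qed

definition "cd = (((-1) mod int m - 1) mod int m)"

lemma cc_eq: "cc = psi (cd, False)"
proof -
  have "((-1) mod int m, True) \<otimes>\<^bsub>DM\<^esub> (1, True) = (cd, False)" by (simp add: D_mult cd_def)
  then show ?thesis unfolding cc_def using Yc_eq Xc_eq psi_mult[OF D_mem3 D_mem4] by simp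
qed

lemma cd_mem: "(cd, False) \<in> carrier DM" using m3 by (simp add: D_carrier cd_def)
lemma cc_Kv: "cc \<in> Kv" using cc_eq psi_Kv cd_mem by simp
lemma cc_K: "cc \<in> K" using cc_Kv Kv_K by blast
lemma cc_B: "cc \<in> Bij \<Omega>" using cc_Kv Kv_B by blast

lemma cc_comm:
  assumes r: "goodr C r"
  shows "cc \<otimes>\<^bsub>S\<^esub> r = r \<otimes>\<^bsub>S\<^esub> cc"
proof -
  have rK: "r \<in> K" and nm: "\<forall>k\<in>K. \<exists>e::nat. k \<otimes>\<^bsub>S\<^esub> r \<otimes>\<^bsub>S\<^esub> pinv \<Omega> k = r [^]\<^bsub>S\<^esub> e"
    using r unfolding goodr_def by auto
  have rB: "r \<in> Bij \<Omega>" using K_B rK by blast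
  have rhoK: "rho \<in> K" and sigK: "sigma \<in> K" using rho_Kv sigma_Kv Kv_K by auto
  have rhoB: "rho \<in> Bij \<Omega>" and sigB: "sigma \<in> Bij \<Omega>" using rhoK sigK K_B by auto
  obtain a :: nat where a: "rho \<otimes>\<^bsub>S\<^esub> r \<otimes>\<^bsub>S\<^esub> pinv \<Omega> rho = r [^]\<^bsub>S\<^esub> a" using nm rhoK by blast
  obtain b :: nat where b: "sigma \<otimes>\<^bsub>S\<^esub> r \<otimes>\<^bsub>S\<^esub> pinv \<Omega> sigma = r [^]\<^bsub>S\<^esub> b" using nm sigK by blast
  have "Xc \<otimes>\<^bsub>S\<^esub> r \<otimes>\<^bsub>S\<^esub> pinv \<Omega> Xc = rho \<otimes>\<^bsub>S\<^esub> (sigma \<otimes>\<^bsub>S\<^esub> r \<otimes>\<^bsub>S\<^esub> pinv \<Omega> sigma) \<otimes>\<^bsub>S\<^esub> pinv \<Omega> rho"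
    unfolding Xc_def using S.conj_compose[of rho sigma r] rhoB sigB rB by simp
  also have "\<dots> = r [^]\<^bsub>S\<^esub> (a * b)" using b S.conj_powb[of rho r a b] a rhoB rB by simp
  finally have X: "Xc \<otimes>\<^bsub>S\<^esub> r \<otimes>\<^bsub>S\<^esub> pinv \<Omega> Xc = r [^]\<^bsub>S\<^esub> (a * b)" .
  have "Yc \<otimes>\<^bsub>S\<^esub> r \<otimes>\<^bsub>S\<^esub> pinv \<Omega> Yc = sigma \<otimes>\<^bsub>S\<^esub> (rho \<otimes>\<^bsub>S\<^esub> r \<otimes>\<^bsub>S\<^esub> pinv \<Omega> rho) \<otimes>\<^bsub>S\<^esub> pinv \<Omega> sigma"
    unfolding Yc_def using S.conj_compose[of sigma rho r] rhoB sigB rB by simp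
  also have "\<dots> = r [^]\<^bsub>S\<^esub> (b * a)" using a S.conj_powb[of sigma r b a] b sigB rB by simp
  finally have Y: "Yc \<otimes>\<^bsub>S\<^esub> r \<otimes>\<^bsub>S\<^esub> pinv \<Omega> Yc = r [^]\<^bsub>S\<^esub> (a * b)" by (simp add: mult.commute)
  have XB: "Xc \<in> carrier S" unfolding Xc_def using rhoB sigB by (simp add: SG_mult_mem)
  have YB: "Yc \<in> carrier S" unfolding Yc_def using rhoB sigB by (simp add: SG_mult_mem)
  have "(inv\<^bsub>S\<^esub> Yc \<otimes>\<^bsub>S\<^esub> Xc) \<otimes>\<^bsub>S\<^esub> r = r \<otimes>\<^bsub>S\<^esub> (inv\<^bsub>S\<^esub> Yc \<otimes>\<^bsub>S\<^esub> Xc)"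
    by (rule S.conj_eq_commute) (use XB YB rB X Y in simp_all)
  then show ?thesis unfolding cc_def using Yc_inv by simp
qed

lemma cc_comm_pow:
  assumes r: "goodr C r"
  shows "cc \<otimes>\<^bsub>S\<^esub> r [^]\<^bsub>S\<^esub> (i::nat) = r [^]\<^bsub>S\<^esub> i \<otimes>\<^bsub>S\<^esub> cc"
proof -
  have rB: "r \<in> carrier S" using r K_B unfolding goodr_def by auto
  have cB: "cc \<in> carrier S" using cc_B by simp
  have "cc \<otimes>\<^bsub>S\<^esub> r \<otimes>\<^bsub>S\<^esub> inv\<^bsub>S\<^esub> cc = r \<otimes>\<^bsub>S\<^esub> cc \<otimes>\<^bsub>S\<^esub> inv\<^bsub>S\<^esub> cc"
    using cc_comm[OF r] by simp
  also have "\<dots> = r \<otimes>\<^bsub>S\<^esub> (cc \<otimes>\<^bsub>S\<^esub> inv\<^bsub>S\<^esub> cc)"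
    using rB cB by (intro S.m_assoc) (simp_all add: SG_inv_mem)
  also have "\<dots> = r" using rB cB by simp
  finally have "cc \<otimes>\<^bsub>S\<^esub> r \<otimes>\<^bsub>S\<^esub> inv\<^bsub>S\<^esub> cc = r" .
  then have "cc \<otimes>\<^bsub>S\<^esub> r [^]\<^bsub>S\<^esub> i \<otimes>\<^bsub>S\<^esub> inv\<^bsub>S\<^esub> cc = r [^]\<^bsub>S\<^esub> i"
    using S.conj_pow[OF cB rB, of i] by simp
  then have "cc \<otimes>\<^bsub>S\<^esub> r [^]\<^bsub>S\<^esub> i \<otimes>\<^bsub>S\<^esub> inv\<^bsub>S\<^esub> cc \<otimes>\<^bsub>S\<^esub> cc = r [^]\<^bsub>S\<^esub> i \<otimes>\<^bsub>S\<^esub> cc" by simp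
  then show ?thesis using rB cB by (simp add: S.m_assoc)
qed

lemma cc_pow_fix:
  assumes C: "C \<in> \<B>" and r: "goodr C r" and x: "x \<in> C"
  shows "(cc [^]\<^bsub>S\<^esub> p) x = x"
proof -
  have rK: "r \<in> K" and rp: "r [^]\<^bsub>S\<^esub> p = \<one>\<^bsub>S\<^esub>" and tr: "\<forall>x\<in>C. \<forall>y\<in>C. \<exists>i::nat. (r [^]\<^bsub>S\<^esub> i) x = y"
    using r unfolding goodr_def by auto
  have rB: "r \<in> Bij \<Omega>" using K_B rK by blast
  have x\<Omega>: "x \<in> \<Omega>" using x blk_sub[OF C] by blast
  have "cc x \<in> C" using K_pt[OF cc_K C x] .
  then obtain i0 :: nat where i0: "(r [^]\<^bsub>S\<^esub> i0) x = cc x" using tr x by blast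
  have rpB: "r [^]\<^bsub>S\<^esub> j \<in> Bij \<Omega>" for j :: nat using S.nat_pow_closed[of r j] rB by simp
  have cpB: "cc [^]\<^bsub>S\<^esub> j \<in> Bij \<Omega>" for j :: nat using S.nat_pow_closed[of cc j] cc_B by simp
  have step: "(cc [^]\<^bsub>S\<^esub> k) x = (r [^]\<^bsub>S\<^esub> (i0 * k)) x" for k :: nat
  proof (induction k)
    case 0
    then show ?case by simp
  next
    case (Suc k)
    have "(cc [^]\<^bsub>S\<^esub> Suc k) x = (cc \<otimes>\<^bsub>S\<^esub> cc [^]\<^bsub>S\<^esub> k) x"
      using S.nat_pow_Suc2[of cc k] cc_B by simp
    also have "\<dots> = cc ((r [^]\<^bsub>S\<^esub> (i0 * k)) x)" using Suc cc_B cpB x\<Omega> by (simp add: SG_mult_apply)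
    also have "\<dots> = (cc \<otimes>\<^bsub>S\<^esub> r [^]\<^bsub>S\<^esub> (i0 * k)) x" using cc_B rpB x\<Omega> by (simp add: SG_mult_apply)
    also have "\<dots> = (r [^]\<^bsub>S\<^esub> (i0 * k) \<otimes>\<^bsub>S\<^esub> cc) x" using cc_comm_pow[OF r] by simp
    also have "\<dots> = (r [^]\<^bsub>S\<^esub> (i0 * k)) (cc x)" using cc_B rpB x\<Omega> by (simp add: SG_mult_apply)
    also have "\<dots> = (r [^]\<^bsub>S\<^esub> (i0 * k)) ((r [^]\<^bsub>S\<^esub> i0) x)" using i0 by simp
    also have "\<dots> = (r [^]\<^bsub>S\<^esub> (i0 * k) \<otimes>\<^bsub>S\<^esub> r [^]\<^bsub>S\<^esub> i0) x" using rpB x\<Omega> by (simp add: SG_mult_apply)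
    also have "\<dots> = (r [^]\<^bsub>S\<^esub> (i0 * Suc k)) x" using rB by (simp add: S.nat_pow_mult add.commute)
    finally show ?case .
  qed
  have "(cc [^]\<^bsub>S\<^esub> p) x = (r [^]\<^bsub>S\<^esub> (p * i0)) x" using step[of p] by (simp add: mult.commute)
  also have "\<dots> = ((r [^]\<^bsub>S\<^esub> p) [^]\<^bsub>S\<^esub> i0) x" using rB by (simp add: S.nat_pow_pow)
  also have "\<dots> = x" using rp x\<Omega> by (simp add: SG_one_apply)
  finally show ?thesis .
qed

lemma cc_pow_one: "cc [^]\<^bsub>S\<^esub> p = \<one>\<^bsub>S\<^esub>"
proof (rule perm_eq_one)
  show "cc [^]\<^bsub>S\<^esub> p \<in> Bij \<Omega>" using S.nat_pow_closed[of cc p] cc_B by simp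
  fix x assume x: "x \<in> \<Omega>"
  obtain C where C: "C \<in> \<B>" "x \<in> C" using blk_ex[OF x] by blast
  obtain r where r: "goodr C r" using exists_goodr[OF C(1)] by blast
  show "(cc [^]\<^bsub>S\<^esub> p) x = x" by (rule cc_pow_fix[OF C(1) r C(2)])
qed

lemma m_dvd_2p: "m dvd 2 * p"
proof -
  have "phi (cc [^]\<^bsub>S\<^esub> p) = (0, False)" using cc_pow_one phi_one by simp
  then have "(cd, False) [^]\<^bsub>DM\<^esub> p = (0, False)" using phi_pow[OF cc_Kv] cc_eq phi_psi[OF cd_mem] by simp
  then have "(int p * cd) mod int m = 0" by (simp add: D_pow_rot)
  moreover have "(int p * cd) mod int m = (int p * (-2)) mod int m"
  proof -
    have "cd mod int m = (-2) mod int m" unfolding cd_def by (simp add: mod_diff_left_eq)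
    then show ?thesis by (metis mod_mult_right_eq)
  qed
  ultimately have "int m dvd int p * (-2)" by (simp add: dvd_eq_mod_eq_0)
  then have "int m dvd int (2 * p)" by (simp add: mult.commute)
  then show ?thesis by (simp only: int_dvd_int_iff)
qed

lemma m_cases: "m = p \<or> m = 2 * p"
proof -
  obtain t where t: "m = p * t" using p_dvd_m by blast
  have p0: "p > 0" using prime_gt_0_nat[OF pr] .
  have "p * t dvd p * 2" using m_dvd_2p t by (simp add: mult.commute)
  then have "t dvd 2" using p0 by simp
  then have "t = 1 \<or> t = 2" using dvd_imp_le[of t 2] m_pos t by (auto simp: le_Suc_eq dest: dvd_imp_le)
  then show ?thesis using t by auto
qed

end

lemma SG_one_mem[simp]: "\<one>\<^bsub>BijGroup \<Omega>\<^esub> \<in> Bij \<Omega>"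
  by (simp add: SG_one id_Bij)

context setting begin

lemma K_pow: "x \<in> K \<Longrightarrow> x [^]\<^bsub>S\<^esub> (i::nat) \<in> K"
proof (induction i)
  case 0
  then show ?case using K_one by simp
next
  case (Suc i)
  then show ?case using K_mult by simp
qed

lemma card_K: "card K = p * (2 * m)"
proof -
  have v\<Omega>: "v \<in> \<Omega>" using vB blk_sub[OF BB] by blast
  have "(\<lambda>g. g v) ` K = B"
  proof
    show "(\<lambda>g. g v) ` K \<subseteq> B" using K_pt[OF _ BB vB] by blast
    show "B \<subseteq> (\<lambda>g. g v) ` K" using K_trans_blk[OF BB] vB by force
  qed
  moreover have "{g \<in> K. g v = v} = Kv" by (simp add: point_stabilizer_def)
  ultimately have "card B * card Kv = card K"
    using orbit_stab_card[OF fin\<Omega> K_sub v\<Omega>] by simp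
  then show ?thesis using cardblocks BB card_Kv by simp
qed

definition r2 where "r2 = (SOME r. goodr B r)"

lemma r2_good: "goodr B r2" unfolding r2_def using exists_goodr[OF BB] by (rule someI_ex)
lemma r2_K: "r2 \<in> K" using r2_good unfolding goodr_def by auto
lemma r2_B: "r2 \<in> Bij \<Omega>" using r2_K K_B by blast
lemma r2_p: "r2 [^]\<^bsub>S\<^esub> p = \<one>\<^bsub>S\<^esub>" using r2_good unfolding goodr_def by auto
lemma r2_tr: "\<forall>x\<in>B. \<forall>y\<in>B. \<exists>i::nat. (r2 [^]\<^bsub>S\<^esub> i) x = y" using r2_good unfolding goodr_def by auto
lemma r2_nm: "k \<in> K \<Longrightarrow> \<exists>e::nat. k \<otimes>\<^bsub>S\<^esub> r2 \<otimes>\<^bsub>S\<^esub> pinv \<Omega> k = r2 [^]\<^bsub>S\<^esub> e"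
  using r2_good unfolding goodr_def by auto

lemma p0: "p > 0" using prime_gt_0_nat[OF pr] .

lemma r2_mod: "r2 [^]\<^bsub>S\<^esub> (i mod p) = r2 [^]\<^bsub>S\<^esub> (i::nat)"
  using S.pow_mod_p[of r2 p i] r2_B r2_p by simp
lemma q_mod: "q [^]\<^bsub>S\<^esub> (i mod p) = q [^]\<^bsub>S\<^esub> (i::nat)"
  using S.pow_mod_p[of q p i] q_B q_props(3) by simp

lemma v\<Omega>: "v \<in> \<Omega>" using vB blk_sub[OF BB] by blast

lemma r2_img: "(\<lambda>i. (r2 [^]\<^bsub>S\<^esub> i) v) ` {..<p} = B"
proof
  show "(\<lambda>i. (r2 [^]\<^bsub>S\<^esub> i) v) ` {..<p} \<subseteq> B"
  proof
    fix y assume "y \<in> (\<lambda>i. (r2 [^]\<^bsub>S\<^esub> i) v) ` {..<p}"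
    then obtain i :: nat where y: "y = (r2 [^]\<^bsub>S\<^esub> i) v" by auto
    have "r2 [^]\<^bsub>S\<^esub> i \<in> K" using K_pow[OF r2_K] .
    then show "y \<in> B" using y K_pt[OF _ BB vB] by blast
  qed
  show "B \<subseteq> (\<lambda>i. (r2 [^]\<^bsub>S\<^esub> i) v) ` {..<p}"
  proof
    fix y assume y: "y \<in> B"
    obtain i :: nat where i: "(r2 [^]\<^bsub>S\<^esub> i) v = y" using r2_tr vB y by blast
    have "(r2 [^]\<^bsub>S\<^esub> (i mod p)) v = y" using i r2_mod by simp
    moreover have "i mod p \<in> {..<p}" using p0 by simp
    ultimately show "y \<in> (\<lambda>i. (r2 [^]\<^bsub>S\<^esub> i) v) ` {..<p}" by (metis imageI)
  qed
qed

lemma r2_reg: "inj_on (\<lambda>i. (r2 [^]\<^bsub>S\<^esub> i) v) {..<p}"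
proof (rule eq_card_imp_inj_on)
  show "finite {..<p}" by simp
  show "card ((\<lambda>i. (r2 [^]\<^bsub>S\<^esub> i) v) ` {..<p}) = card {..<p}"
    using r2_img cardblocks BB by simp
qed

lemma powr_commute:
  assumes "x \<in> Bij \<Omega>" "y \<in> Bij \<Omega>" "x \<otimes>\<^bsub>S\<^esub> y = y \<otimes>\<^bsub>S\<^esub> x"
  shows "x [^]\<^bsub>S\<^esub> (a::nat) \<otimes>\<^bsub>S\<^esub> y [^]\<^bsub>S\<^esub> (b::nat) = y [^]\<^bsub>S\<^esub> b \<otimes>\<^bsub>S\<^esub> x [^]\<^bsub>S\<^esub> a"
proof -
  have "x [^]\<^bsub>S\<^esub> a \<otimes>\<^bsub>S\<^esub> y = y \<otimes>\<^bsub>S\<^esub> x [^]\<^bsub>S\<^esub> a"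
    using S.group_commutes_pow[of x y a] assms by simp
  then have "y \<otimes>\<^bsub>S\<^esub> x [^]\<^bsub>S\<^esub> a = x [^]\<^bsub>S\<^esub> a \<otimes>\<^bsub>S\<^esub> y" by simp
  then have "y [^]\<^bsub>S\<^esub> b \<otimes>\<^bsub>S\<^esub> x [^]\<^bsub>S\<^esub> a = x [^]\<^bsub>S\<^esub> a \<otimes>\<^bsub>S\<^esub> y [^]\<^bsub>S\<^esub> b"
    using S.group_commutes_pow[of y "x [^]\<^bsub>S\<^esub> a" b] assms by simp
  then show ?thesis by simp
qed

lemma K0_fixv: "x \<in> K0 \<Longrightarrow> x v = v" using vB unfolding pointwise_kernel_def by blast

lemma r2pow_fix: "(r2 [^]\<^bsub>S\<^esub> (k::nat)) v = v \<Longrightarrow> r2 [^]\<^bsub>S\<^esub> k = \<one>\<^bsub>S\<^esub>"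
proof -
  assume h: "(r2 [^]\<^bsub>S\<^esub> k) v = v"
  have "(r2 [^]\<^bsub>S\<^esub> (k mod p)) v = (r2 [^]\<^bsub>S\<^esub> (0::nat)) v" using h r2_mod v\<Omega> by (simp add: SG_one_apply)
  then have "k mod p = 0" using r2_reg p0 by (simp add: inj_on_def)
  then show ?thesis using r2_mod[of k] by simp
qed

lemma q_r2_comm: "q \<otimes>\<^bsub>S\<^esub> r2 = r2 \<otimes>\<^bsub>S\<^esub> q"
proof -
  have qK: "q \<in> K" using q_props(1) K0_K by blast
  obtain e :: nat where e: "q \<otimes>\<^bsub>S\<^esub> r2 \<otimes>\<^bsub>S\<^esub> pinv \<Omega> q = r2 [^]\<^bsub>S\<^esub> e" using r2_nm[OF qK] by blast
  define x where "x = q \<otimes>\<^bsub>S\<^esub> r2 \<otimes>\<^bsub>S\<^esub> pinv \<Omega> q \<otimes>\<^bsub>S\<^esub> pinv \<Omega> r2"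
  have x0: "x = r2 [^]\<^bsub>S\<^esub> e \<otimes>\<^bsub>S\<^esub> r2 [^]\<^bsub>S\<^esub> ((p - 1) * 1)"
    unfolding x_def e using S.powers_inv[of r2 p 1] r2_B r2_p p0 by simp
  have rc: "r2 \<in> carrier S" using r2_B by simp
  have x1: "x = r2 [^]\<^bsub>S\<^esub> (e + (p - 1) * 1)"
    using x0 S.nat_pow_mult[OF rc, of e "(p - 1) * 1"] by (simp only:)
  have iqT: "pinv \<Omega> q \<in> T" using subgroup.m_inv_closed[OF T_sub q_pow_T[of 1]] q_B by simp
  have "r2 \<otimes>\<^bsub>S\<^esub> pinv \<Omega> q \<otimes>\<^bsub>S\<^esub> pinv \<Omega> r2 \<in> T" using T_normal[OF r2_K iqT] .
  then have fx: "(r2 \<otimes>\<^bsub>S\<^esub> pinv \<Omega> q \<otimes>\<^bsub>S\<^esub> pinv \<Omega> r2) v = v" using K0_fixv T_K0 by blast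
  have x2: "x = q \<otimes>\<^bsub>S\<^esub> (r2 \<otimes>\<^bsub>S\<^esub> pinv \<Omega> q \<otimes>\<^bsub>S\<^esub> pinv \<Omega> r2)"
    unfolding x_def using q_B r2_B by (simp add: S.m_assoc)
  have "x v = v" unfolding x2 using fx K0_fixv[OF q_props(1)] q_B r2_B v\<Omega> by (simp add: SG_mult_apply)
  then have "x = \<one>\<^bsub>S\<^esub>" using r2pow_fix x1 by simp
  then have "q \<otimes>\<^bsub>S\<^esub> r2 \<otimes>\<^bsub>S\<^esub> pinv \<Omega> q \<otimes>\<^bsub>S\<^esub> pinv \<Omega> r2 \<otimes>\<^bsub>S\<^esub> r2 \<otimes>\<^bsub>S\<^esub> q = r2 \<otimes>\<^bsub>S\<^esub> q"
    unfolding x_def using q_B r2_B by simp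
  then show ?thesis using q_B r2_B by (simp add: S.m_assoc)
qed

definition "Np = DirProd (integer_mod_group p) (integer_mod_group p)"
definition "alpha x = q [^]\<^bsub>S\<^esub> nat (fst x) \<otimes>\<^bsub>S\<^esub> r2 [^]\<^bsub>S\<^esub> nat (snd x)"

lemma carrier_Np: "carrier Np = {0..<int p} \<times> {0..<int p}"
  using p0 by (simp add: Np_def carrier_integer_mod_group)

lemma alpha_K: "alpha x \<in> K"
proof -
  have "q [^]\<^bsub>S\<^esub> nat (fst x) \<in> K" using K0_pow q_props(1) K0_K by blast
  moreover have "r2 [^]\<^bsub>S\<^esub> nat (snd x) \<in> K" using K_pow[OF r2_K] .
  ultimately show ?thesis unfolding alpha_def using K_mult by blast
qed

lemma alpha_mult: "x \<in> carrier Np \<Longrightarrow> y \<in> carrier Np \<Longrightarrow> alpha (x \<otimes>\<^bsub>Np\<^esub> y) = alpha x \<otimes>\<^bsub>S\<^esub> alpha y"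
proof -
  assume xy: "x \<in> carrier Np" "y \<in> carrier Np"
  obtain a b c d where abcd: "x = (a, b)" "y = (c, d)" by fastforce
  have nn: "0 \<le> a" "0 \<le> b" "0 \<le> c" "0 \<le> d" using xy abcd carrier_Np by auto
  have m: "x \<otimes>\<^bsub>Np\<^esub> y = ((a + c) mod int p, (b + d) mod int p)"
    using abcd by (simp add: Np_def DirProd_def)
  have e1: "nat ((a + c) mod int p) = (nat a + nat c) mod p" using nn by (simp add: nat_mod_distrib nat_add_distrib)
  have e2: "nat ((b + d) mod int p) = (nat b + nat d) mod p" using nn by (simp add: nat_mod_distrib nat_add_distrib)
  have "alpha (x \<otimes>\<^bsub>Np\<^esub> y) = q [^]\<^bsub>S\<^esub> (nat a + nat c) \<otimes>\<^bsub>S\<^esub> r2 [^]\<^bsub>S\<^esub> (nat b + nat d)"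
    unfolding alpha_def m using e1 e2 q_mod r2_mod by simp
  also have "\<dots> = q [^]\<^bsub>S\<^esub> nat a \<otimes>\<^bsub>S\<^esub> (q [^]\<^bsub>S\<^esub> nat c \<otimes>\<^bsub>S\<^esub> r2 [^]\<^bsub>S\<^esub> nat b) \<otimes>\<^bsub>S\<^esub> r2 [^]\<^bsub>S\<^esub> nat d"
    using q_B r2_B by (simp add: S.nat_pow_mult[symmetric] S.m_assoc)
  also have "\<dots> = q [^]\<^bsub>S\<^esub> nat a \<otimes>\<^bsub>S\<^esub> (r2 [^]\<^bsub>S\<^esub> nat b \<otimes>\<^bsub>S\<^esub> q [^]\<^bsub>S\<^esub> nat c) \<otimes>\<^bsub>S\<^esub> r2 [^]\<^bsub>S\<^esub> nat d"
    using powr_commute[OF q_B r2_B q_r2_comm] by simp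
  also have "\<dots> = alpha x \<otimes>\<^bsub>S\<^esub> alpha y"
    unfolding alpha_def abcd using q_B r2_B by (simp add: S.m_assoc)
  finally show ?thesis .
qed

lemma alpha_inj: "inj_on alpha (carrier Np)"
proof (rule inj_onI)
  fix x y assume xy: "x \<in> carrier Np" "y \<in> carrier Np" "alpha x = alpha y"
  obtain a b c d where abcd: "x = (a, b)" "y = (c, d)" by fastforce
  have rng: "0 \<le> a" "a < int p" "0 \<le> b" "b < int p" "0 \<le> c" "c < int p" "0 \<le> d" "d < int p"
    using xy abcd carrier_Np by auto
  have e: "q [^]\<^bsub>S\<^esub> nat a \<otimes>\<^bsub>S\<^esub> r2 [^]\<^bsub>S\<^esub> nat b = q [^]\<^bsub>S\<^esub> nat c \<otimes>\<^bsub>S\<^esub> r2 [^]\<^bsub>S\<^esub> nat d"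
    using xy(3) abcd unfolding alpha_def by simp
  have fixq: "(q [^]\<^bsub>S\<^esub> k) z = z" if "z \<in> B" for k :: nat and z
    using K0_pow[OF q_props(1), of k] that unfolding pointwise_kernel_def by blast
  have inB: "(r2 [^]\<^bsub>S\<^esub> k) v \<in> B" for k :: nat
  proof -
    have "r2 [^]\<^bsub>S\<^esub> k \<in> K" using K_pow[OF r2_K] .
    then show ?thesis using K_pt[OF _ BB vB] by blast
  qed
  have "(q [^]\<^bsub>S\<^esub> nat a \<otimes>\<^bsub>S\<^esub> r2 [^]\<^bsub>S\<^esub> nat b) v = (r2 [^]\<^bsub>S\<^esub> nat b) v"
    using fixq[OF inB] q_B r2_B v\<Omega> by (simp add: SG_mult_apply)
  moreover have "(q [^]\<^bsub>S\<^esub> nat c \<otimes>\<^bsub>S\<^esub> r2 [^]\<^bsub>S\<^esub> nat d) v = (r2 [^]\<^bsub>S\<^esub> nat d) v"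
    using fixq[OF inB] q_B r2_B v\<Omega> by (simp add: SG_mult_apply)
  ultimately have "(r2 [^]\<^bsub>S\<^esub> nat b) v = (r2 [^]\<^bsub>S\<^esub> nat d) v" using e by simp
  then have bd: "nat b = nat d" using r2_reg rng by (simp add: inj_on_def)
  then have "q [^]\<^bsub>S\<^esub> nat a = q [^]\<^bsub>S\<^esub> nat c" using e q_B r2_B by simp
  then have "nat a = nat c" using S.prime_pow_inj[of q p] q_B q_props pr rng by (simp add: inj_on_def)
  then show "x = y" using abcd bd rng by (simp add: eq_nat_nat_iff)
qed

lemma conj_alpha: "k \<in> K \<Longrightarrow> x \<in> carrier Np \<Longrightarrow> k \<otimes>\<^bsub>S\<^esub> alpha x \<otimes>\<^bsub>S\<^esub> pinv \<Omega> k \<in> alpha ` carrier Np"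
proof -
  assume k: "k \<in> K" and x: "x \<in> carrier Np"
  have kB: "k \<in> Bij \<Omega>" using K_B k by blast
  obtain a b where ab: "x = (a, b)" by fastforce
  have "k \<otimes>\<^bsub>S\<^esub> q \<otimes>\<^bsub>S\<^esub> pinv \<Omega> k \<in> T" using T_normal[OF k q_pow_T[of 1]] q_B by simp
  then obtain e1 :: nat where e1: "k \<otimes>\<^bsub>S\<^esub> q \<otimes>\<^bsub>S\<^esub> pinv \<Omega> k = q [^]\<^bsub>S\<^esub> e1" using T_pow by blast
  obtain e2 :: nat where e2: "k \<otimes>\<^bsub>S\<^esub> r2 \<otimes>\<^bsub>S\<^esub> pinv \<Omega> k = r2 [^]\<^bsub>S\<^esub> e2" using r2_nm[OF k] by blast
  have "k \<otimes>\<^bsub>S\<^esub> alpha x \<otimes>\<^bsub>S\<^esub> pinv \<Omega> k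
      = (k \<otimes>\<^bsub>S\<^esub> q [^]\<^bsub>S\<^esub> nat a \<otimes>\<^bsub>S\<^esub> pinv \<Omega> k) \<otimes>\<^bsub>S\<^esub> (k \<otimes>\<^bsub>S\<^esub> r2 [^]\<^bsub>S\<^esub> nat b \<otimes>\<^bsub>S\<^esub> pinv \<Omega> k)"
    unfolding alpha_def ab using kB q_B r2_B by (simp add: S.m_assoc S.cancel_l2)
  also have "\<dots> = q [^]\<^bsub>S\<^esub> (e1 * nat a) \<otimes>\<^bsub>S\<^esub> r2 [^]\<^bsub>S\<^esub> (e2 * nat b)"
    using S.conj_powb[of k q e1 "nat a"] S.conj_powb[of k r2 e2 "nat b"] e1 e2 kB q_B r2_B by simp
  also have "\<dots> = alpha (int ((e1 * nat a) mod p), int ((e2 * nat b) mod p))"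
    unfolding alpha_def using q_mod r2_mod by simp
  finally have eq: "k \<otimes>\<^bsub>S\<^esub> alpha x \<otimes>\<^bsub>S\<^esub> pinv \<Omega> k = alpha (int ((e1 * nat a) mod p), int ((e2 * nat b) mod p))" .
  have "(int ((e1 * nat a) mod p), int ((e2 * nat b) mod p)) \<in> carrier Np"
    using p0 carrier_Np by simp
  then show ?thesis using eq by blast
qed

lemma alpha_pow_p: "x \<in> carrier Np \<Longrightarrow> alpha x [^]\<^bsub>S\<^esub> p = \<one>\<^bsub>S\<^esub>"
proof -
  assume x: "x \<in> carrier Np"
  have c: "q [^]\<^bsub>S\<^esub> nat (fst x) \<otimes>\<^bsub>S\<^esub> r2 [^]\<^bsub>S\<^esub> nat (snd x) = r2 [^]\<^bsub>S\<^esub> nat (snd x) \<otimes>\<^bsub>S\<^esub> q [^]\<^bsub>S\<^esub> nat (fst x)"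
    using powr_commute[OF q_B r2_B q_r2_comm] by simp
  have "alpha x [^]\<^bsub>S\<^esub> p = (q [^]\<^bsub>S\<^esub> nat (fst x)) [^]\<^bsub>S\<^esub> p \<otimes>\<^bsub>S\<^esub> (r2 [^]\<^bsub>S\<^esub> nat (snd x)) [^]\<^bsub>S\<^esub> p"
    unfolding alpha_def using S.pow_mult_distrib[OF c] q_B r2_B by simp
  also have "\<dots> = (q [^]\<^bsub>S\<^esub> p) [^]\<^bsub>S\<^esub> nat (fst x) \<otimes>\<^bsub>S\<^esub> (r2 [^]\<^bsub>S\<^esub> p) [^]\<^bsub>S\<^esub> nat (snd x)"
    using q_B r2_B by (simp add: S.nat_pow_pow mult.commute)
  also have "\<dots> = \<one>\<^bsub>S\<^esub>" using q_props(3) r2_p by simp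
  finally show ?thesis .
qed

lemma odd_p: "odd p" using prime_odd_nat[OF pr] p3 by simp

lemma inv2_p_one: "y \<in> Bij \<Omega> \<Longrightarrow> y \<otimes>\<^bsub>S\<^esub> y = \<one>\<^bsub>S\<^esub> \<Longrightarrow> y [^]\<^bsub>S\<^esub> p = \<one>\<^bsub>S\<^esub> \<Longrightarrow> y = \<one>\<^bsub>S\<^esub>"
proof -
  assume y: "y \<in> Bij \<Omega>" "y \<otimes>\<^bsub>S\<^esub> y = \<one>\<^bsub>S\<^esub>" "y [^]\<^bsub>S\<^esub> p = \<one>\<^bsub>S\<^esub>"
  obtain k where k: "p = 2 * k + 1" using odd_p oddE by blast
  have "y [^]\<^bsub>S\<^esub> (2::nat) = \<one>\<^bsub>S\<^esub>" using y by (simp add: numeral_2_eq_2)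
  then have "y [^]\<^bsub>S\<^esub> p = y" using k y(1) by (simp add: S.nat_pow_mult[symmetric] S.nat_pow_pow[symmetric])
  then show ?thesis using y by simp
qed

lemma Kg_eq: "perm_group \<Omega> K = S\<lparr>carrier := K\<rparr>" by (simp add: perm_group_def)

lemma semidirect_general:
  fixes H :: "('h, 'e) monoid_scheme"
  assumes grH: "group H" and finH: "finite (carrier H)"
    and beta: "beta \<in> carrier H \<rightarrow> Kv"
    and bmult: "\<And>a b. a \<in> carrier H \<Longrightarrow> b \<in> carrier H \<Longrightarrow> beta (a \<otimes>\<^bsub>H\<^esub> b) = beta a \<otimes>\<^bsub>S\<^esub> beta b"
    and binj: "inj_on beta (carrier H)"
    and bsq: "\<And>a. a \<in> carrier H \<Longrightarrow> beta a \<otimes>\<^bsub>S\<^esub> beta a = \<one>\<^bsub>S\<^esub>"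
    and card: "card K = card (carrier Np) * card (carrier H)"
  shows "is_semidirect_of (perm_group \<Omega> K) Np H"
proof -
  have grK: "group (perm_group \<Omega> K)" using S.subgroup_imp_group[OF K_sub] by (simp add: Kg_eq)
  have grN: "group Np" unfolding Np_def by (simp add: DirProd_group)
  have finN: "finite (carrier Np)" using carrier_Np by simp
  have ahom: "alpha \<in> hom Np (perm_group \<Omega> K)"
    by (rule homI) (simp_all add: Kg_eq alpha_K alpha_mult)
  have bK: "a \<in> carrier H \<Longrightarrow> beta a \<in> K" for a using beta Kv_K by blast
  have bhom: "beta \<in> hom H (perm_group \<Omega> K)"
    by (rule homI) (simp_all add: Kg_eq bK bmult)
  show ?thesis
  proof (rule semidirect_lemma[OF grK grN grH finN finH ahom alpha_inj bhom binj])
    show "beta h \<otimes>\<^bsub>perm_group \<Omega> K\<^esub> alpha x \<otimes>\<^bsub>perm_group \<Omega> K\<^esub> inv\<^bsub>perm_group \<Omega> K\<^esub> beta h \<in> alpha ` carrier Np"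
      if "h \<in> carrier H" "x \<in> carrier Np" for h x
    proof -
      have "inv\<^bsub>perm_group \<Omega> K\<^esub> beta h = pinv \<Omega> (beta h)"
        using S.m_inv_consistent[OF K_sub bK[OF that(1)]] by (simp add: Kg_eq)
      then show ?thesis using conj_alpha[OF bK[OF that(1)] that(2)] by (simp add: Kg_eq)
    qed
    show "alpha x = \<one>\<^bsub>perm_group \<Omega> K\<^esub>" if "x \<in> carrier Np" "h \<in> carrier H" "alpha x = beta h" for x h
    proof -
      have "alpha x \<in> Bij \<Omega>" using alpha_K K_B by blast
      moreover have "alpha x \<otimes>\<^bsub>S\<^esub> alpha x = \<one>\<^bsub>S\<^esub>" using bsq[OF that(2)] that(3) by simp
      ultimately have "alpha x = \<one>\<^bsub>S\<^esub>" using inv2_p_one alpha_pow_p[OF that(1)] by blast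
      then show ?thesis by (simp add: Kg_eq)
    qed
    show "card (carrier (perm_group \<Omega> K)) = card (carrier Np) * card (carrier H)"
      using card by (simp add: Kg_eq)
  qed
qed

lemma card_Np: "card (carrier Np) = p * p"
  using carrier_Np by (simp add: card_cartesian_product)

lemma case_p: "m = p \<Longrightarrow> is_semidirect_of (perm_group \<Omega> K) Np (integer_mod_group 2)"
proof -
  assume mp: "m = p"
  define beta :: "int \<Rightarrow> ('a \<Rightarrow> 'a)" where "beta i = (if i = 0 then \<one>\<^bsub>S\<^esub> else sigma)" for i
  have c2: "carrier (integer_mod_group 2) = {0, 1}" by (auto simp: carrier_integer_mod_group)
  have sig2: "sigma \<otimes>\<^bsub>S\<^esub> sigma = \<one>\<^bsub>S\<^esub>"
  proof -
    have "(0::int, True) \<otimes>\<^bsub>DM\<^esub> (0, True) = (0, False)" by (simp add: D_mult)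
    then show ?thesis unfolding sigma_def using psi_mult[OF D_mem2 D_mem2] psi_one by simp
  qed
  have sig1: "sigma \<noteq> \<one>\<^bsub>S\<^esub>"
  proof
    assume "sigma = \<one>\<^bsub>S\<^esub>"
    then have "phi sigma = (0, False)" using phi_one by simp
    then show False unfolding sigma_def using phi_psi[OF D_mem2] by simp
  qed
  have sB: "sigma \<in> Bij \<Omega>" using sigma_Kv Kv_B by blast
  show ?thesis
  proof (rule semidirect_general)
    show "group (integer_mod_group 2)" by simp
    show "finite (carrier (integer_mod_group 2))" using c2 by simp
    show "beta \<in> carrier (integer_mod_group 2) \<rightarrow> Kv"
      using sigma_Kv subgroup.one_closed[OF Kv_sub] c2 unfolding beta_def by auto
    show "beta (a \<otimes>\<^bsub>integer_mod_group 2\<^esub> b) = beta a \<otimes>\<^bsub>S\<^esub> beta b"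
      if "a \<in> carrier (integer_mod_group 2)" "b \<in> carrier (integer_mod_group 2)" for a b
      using that c2 sig2 sB unfolding beta_def by auto
    show "inj_on beta (carrier (integer_mod_group 2))"
      using c2 sig1 unfolding beta_def by (auto simp: inj_on_def)
    show "beta a \<otimes>\<^bsub>S\<^esub> beta a = \<one>\<^bsub>S\<^esub>" if "a \<in> carrier (integer_mod_group 2)" for a
      using sig2 unfolding beta_def by simp
    show "card K = card (carrier Np) * card (carrier (integer_mod_group 2))"
      using card_K card_Np c2 mp by simp
  qed
qed

lemma case_2p: "m = 2 * p \<Longrightarrow> is_semidirect_of (perm_group \<Omega> K) Np (dihedral_group 2)"
proof -
  assume mp: "m = 2 * p"
  define beta :: "int \<times> bool \<Rightarrow> ('a \<Rightarrow> 'a)" where "beta x = psi (int p * fst x, snd x)" for x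
  have c2: "carrier (dihedral_group 2) = {0, 1} \<times> (UNIV :: bool set)" by (auto simp: D_carrier)
  have memD: "(int p * i, e) \<in> carrier DM" if "i \<in> {0, 1}" for i e
    using that mp p0 by (auto simp: D_carrier)
  have bKv: "beta x \<in> Kv" if "x \<in> carrier (dihedral_group 2)" for x
    using that c2 memD psi_Kv unfolding beta_def by (cases x) auto
  show ?thesis
  proof (rule semidirect_general)
    show "group (dihedral_group 2)" by (rule group_D2)
    show "finite (carrier (dihedral_group 2))" using c2 by simp
    show "beta \<in> carrier (dihedral_group 2) \<rightarrow> Kv" using bKv by blast
    show "beta (a \<otimes>\<^bsub>dihedral_group 2\<^esub> b) = beta a \<otimes>\<^bsub>S\<^esub> beta b"
      if ab: "a \<in> carrier (dihedral_group 2)" "b \<in> carrier (dihedral_group 2)" for a b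
    proof -
      obtain i e j f where ij: "a = (i, e)" "b = (j, f)" "i \<in> {0, 1}" "j \<in> {0, 1}"
        using ab c2 by (cases a, cases b) auto
      have "(int p * i, e) \<otimes>\<^bsub>DM\<^esub> (int p * j, f) = (int p * fst (a \<otimes>\<^bsub>dihedral_group 2\<^esub> b), snd (a \<otimes>\<^bsub>dihedral_group 2\<^esub> b))"
        using ij mp by (auto simp: D_mult mod_mult_mult1[symmetric] algebra_simps)
      then have "beta (a \<otimes>\<^bsub>dihedral_group 2\<^esub> b) = psi ((int p * i, e) \<otimes>\<^bsub>DM\<^esub> (int p * j, f))"
        unfolding beta_def by simp
      also have "\<dots> = psi (int p * i, e) \<otimes>\<^bsub>S\<^esub> psi (int p * j, f)"
        by (rule psi_mult[OF memD[OF ij(3)] memD[OF ij(4)]])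
      finally show ?thesis unfolding beta_def using ij by simp
    qed
    show "inj_on beta (carrier (dihedral_group 2))"
    proof (rule inj_onI)
      fix a b assume ab: "a \<in> carrier (dihedral_group 2)" "b \<in> carrier (dihedral_group 2)" "beta a = beta b"
      obtain i e j f where ij: "a = (i, e)" "b = (j, f)" "i \<in> {0, 1}" "j \<in> {0, 1}"
        using ab c2 by (cases a, cases b) auto
      have "phi (beta a) = phi (beta b)" using ab(3) by simp
      then have "(int p * i, e) = (int p * j, f)" unfolding beta_def using ij phi_psi memD by simp
      then show "a = b" using ij p0 by simp
    qed
    show "beta a \<otimes>\<^bsub>S\<^esub> beta a = \<one>\<^bsub>S\<^esub>" if a: "a \<in> carrier (dihedral_group 2)" for a
    proof -
      obtain i e where ij: "a = (i, e)" "i \<in> {0, 1}" using a c2 by (cases a) auto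
      have "(int p * i, e) \<otimes>\<^bsub>DM\<^esub> (int p * i, e) = (0, False)"
        using ij mp by (auto simp: D_mult)
      then have "psi ((int p * i, e) \<otimes>\<^bsub>DM\<^esub> (int p * i, e)) = \<one>\<^bsub>S\<^esub>" using psi_one by simp
      then show ?thesis unfolding beta_def using psi_mult[OF memD[OF ij(2)] memD[OF ij(2)]] ij by simp
    qed
    show "card K = card (carrier Np) * card (carrier (dihedral_group 2))"
      using card_K card_Np D_card[of 2] mp by simp
  qed
qed

lemma final: "is_semidirect_of (perm_group \<Omega> K) Np (integer_mod_group 2)
  \<or> is_semidirect_of (perm_group \<Omega> K) Np (dihedral_group 2)"
  using m_cases case_p case_2p by blast

end

theorem mainTheorem11:
  fixes p n m :: nat and \<Omega> :: "'a set" and G :: "('a \<Rightarrow> 'a) set"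
    and \<B> :: "'a set set" and B :: "'a set" and v :: 'a
  assumes "Factorial_Ring.prime p" and "p \<ge> 3"
    and "finite \<Omega>" and "card \<Omega> = p ^ 2"
    and "subgroup G (BijGroup \<Omega>)"
    and "transitive_on \<Omega> G"
    and "n \<ge> 2"
    and "\<forall>w\<in>\<Omega>. perm_group \<Omega> (point_stabilizer G w) \<cong> dihedral_group n"
    and "block_system \<Omega> G \<B>" and "\<forall>C\<in>\<B>. card C = p"
    and "B \<in> \<B>" and "v \<in> B"
    and "pointwise_kernel (block_kernel G \<B>) B \<noteq> {\<one>\<^bsub>BijGroup \<Omega>\<^esub>}"
    and "perm_group \<Omega> (point_stabilizer (block_kernel G \<B>) v) \<cong> dihedral_group m"
    and "m = n \<or> 2 * m = n"
  shows "is_semidirect_of (perm_group \<Omega> (block_kernel G \<B>))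
           (DirProd (integer_mod_group p) (integer_mod_group p)) (integer_mod_group 2)
       \<or> is_semidirect_of (perm_group \<Omega> (block_kernel G \<B>))
           (DirProd (integer_mod_group p) (integer_mod_group p)) (dihedral_group 2)"
proof -
  interpret setting p n m \<Omega> G \<B> B v
    by (rule setting.intro) (use assms in auto)
  show ?thesis using final unfolding Np_def .
qed

end
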